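(* Let $1\le k<n<m<2n$. Under the shuffle representation, the image of $e[k,m]$ is $$e[k,m]=\alpha_k^m\cdot\big\{(e(m,k))+p_{n-1,n}\,(e'(m,k))\big\},\qquad \alpha_k^m=\epsilon_k^m(q-1)^{m-k-1}\prod_{k\le i<j\le m,\ i,j\ne n-1}p_{ij},$$ where $\epsilon_k^m=q^{-1}$ if $m=\phi(k)$ and $\epsilon_k^m=1$ otherwise.
   Context: Let $\mathbf{k}$ be a field, $G$ an abelian group, $n\ge3$, $X=\{x_1,\dots,x_n\}$, $g_i\in G$, characters $\chi^i:G\to\mathbf{k}^*$, $p_{ij}=\chi^i(g_j)$; for words $u,v$, $p(u,v)=\chi^u(g_v)$ where $g_u,\chi^u$ replace each $x_i$ by $g_i$, resp. $\chi^i$ (bimultiplicative). $G\langle X\rangle$: skew group algebra with $x_ig=\chi^i(g)gx_i$; skew bracket $[u,v]=uv-p(u,v)vu$. Fix $q\in\mathbf{k}^*$, $q\ne-1$; assume $p_{ii}=q$ ($1\le i\le n$), $p_{i,i-1}p_{i-1,i}=q^{-1}$ ($1<i<n$), $p_{n-2,n}p_{n,n-2}=q^{-1}$, $p_{n-1,n}p_{n,n-1}=1$, $p_{ij}p_{ji}=1$ for all other $i<j$ with $j>i+1$. $U_q^+(\mathfrak{so}_{2n})$ is the quotient of $G\langle X\rangle$ by the ideal generated by $[x_i,[x_i,x_{i+1}]]$, $[[x_i,x_{i+1}],x_{i+1}]$ ($1\le i\le n-2$), $[x_{n-2},[x_{n-2},x_n]]$, $[[x_{n-2},x_n],x_n]$,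 $[x_i,x_j]$ ($1\le i<j\le n-1$, $j>i+1$), $[x_i,x_n]$ ($i\le n-3$), $[x_{n-1},x_n]$. For $n<i<2n$, $x_i:=x_{2n-i}$, and $p_{ij}$ with such indices means $\chi$ of the corresponding generators; $\phi(i)=2n-i$. Words: $e(k,m)$ is $x_k\cdots x_m$ if $m<n$ or $k>n$; $x_k\cdots x_{n-2}x_nx_{n+1}\cdots x_m$ if $k<n-1<m$; $x_nx_{n+1}\cdots x_m$ if $k=n-1<m$; $x_nx_{n+2}\cdots x_m$ if $k=n$. $e'(k,m)$ is obtained from $e(k,m)$ by replacing the subword $x_nx_{n+1}$ (if present) by $x_{n-1}x_n$; $e(m,k)$, $e'(m,k)$ denote the reversed words. $e[k,m]$ is the bracketing of the letters $y_1\cdots y_r$ of $e(k,m)$ (a single letter unbracketed): $[[\dots[y_1,y_2],\dots],y_r]$ if $m<\phi(k)$; $[y_1,[y_2,[\dots,[y_{r-1},y_r]\dots]]]$ if $m>\phi(k)$; $e[k,m]=e[k,m-1]x_m-q^{-1}p(e(k,m-1),x_m)x_me[k,m-1]$ if $m=\phi(k)$. Shuffle representation: $\mathrm{Sh}$ has basis the comonomials $(z_1\cdots z_r)$, $z_i\in X$, with product $(a_1\cdots a_r)(b_1\cdots b_s)=\sum_w c_w(w)$ over all shuffles $w$, $c_w=\prod p(b,a)^{-1}$ over pairs of a letter $a$ of the first and $b$ of the second factor with $b$ preceding $a$ in $w$. The map $x_i\mapsto(x_i)$ extends to an algebra homomorphism from the subalgebra of $U_q^+(\mathfrak{so}_{2n})$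 generated by $x_1,\dots,x_n$ into $\mathrm{Sh}$; the claim concerns images under it. *)

theory Defs
  imports Main
begin

text \<open>Shuffle algebra Sh: an element is a coefficient function on words
(lists of generator indices 1..n); the comonomial (z1...zr) is the indicator
of the word.  P i j stands for p_ij = chi^i(g_j).\<close>

type_synonym 'k sh = "nat list \<Rightarrow> 'k"

definition comon :: "nat list \<Rightarrow> 'k::field sh" where
  "comon u = (\<lambda>v. if v = u then 1 else 0)"

definition sh_scale :: "'k::field \<Rightarrow> 'k sh \<Rightarrow> 'k sh" where
  "sh_scale c f = (\<lambda>w. c * f w)"

definition sh_add :: "'k::field sh \<Rightarrow> 'k sh \<Rightarrow> 'k sh" where
  "sh_add f g = (\<lambda>w. f w + g w)"

text \<open>Shuffle coefficient: S is the set of positions of w occupied by the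
first factor; c = product of p(b,a)^{-1} over a in S, b not in S, b before a.\<close>
definition sh_coef :: "(nat \<Rightarrow> nat \<Rightarrow> 'k::field) \<Rightarrow> nat list \<Rightarrow> nat set \<Rightarrow> 'k" where
  "sh_coef P w S = (\<Prod>a\<in>S. \<Prod>b\<in>{0..<length w} - S. if b < a then inverse (P (w!b) (w!a)) else 1)"

definition sh_mult :: "(nat \<Rightarrow> nat \<Rightarrow> 'k::field) \<Rightarrow> 'k sh \<Rightarrow> 'k sh \<Rightarrow> 'k sh" where
  "sh_mult P f g = (\<lambda>w. \<Sum>S\<in>Pow {0..<length w}.
       f (nths w S) * g (nths w ({0..<length w} - S)) * sh_coef P w S)"

definition pw :: "(nat \<Rightarrow> nat \<Rightarrow> 'k::field) \<Rightarrow> nat list \<Rightarrow> nat list \<Rightarrow> 'k" where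
  "pw P u v = (\<Prod>i<length u. \<Prod>j<length v. P (u!i) (v!j))"

text \<open>Skew bracket [A,B] = AB - p(u,v) BA of homogeneous elements of degrees u, v.\<close>
definition sh_br :: "(nat \<Rightarrow> nat \<Rightarrow> 'k::field) \<Rightarrow> nat list \<Rightarrow> nat list \<Rightarrow> 'k sh \<Rightarrow> 'k sh \<Rightarrow> 'k sh" where
  "sh_br P u v A B = sh_add (sh_mult P A B) (sh_scale (- pw P u v) (sh_mult P B A))"

fun rightb :: "(nat \<Rightarrow> nat \<Rightarrow> 'k::field) \<Rightarrow> nat list \<Rightarrow> 'k sh" where
  "rightb P [] = (\<lambda>_. 0)"
| "rightb P [y] = comon [y]"
| "rightb P (y # ys) = sh_br P [y] ys (comon [y]) (rightb P ys)"

fun leftb_rev :: "(nat \<Rightarrow> nat \<Rightarrow> 'k::field) \<Rightarrow> nat list \<Rightarrow> 'k sh" where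
  "leftb_rev P [] = (\<lambda>_. 0)"
| "leftb_rev P [y] = comon [y]"
| "leftb_rev P (y # ys) = sh_br P (rev ys) [y] (leftb_rev P ys) (comon [y])"

definition leftb :: "(nat \<Rightarrow> nat \<Rightarrow> 'k::field) \<Rightarrow> nat list \<Rightarrow> 'k sh" where
  "leftb P ys = leftb_rev P (rev ys)"

text \<open>Index conventions: x_i := x_{2n-i} for n < i < 2n; phi(i) = 2n - i.\<close>
definition ltr :: "nat \<Rightarrow> nat \<Rightarrow> nat" where
  "ltr n i = (if i \<le> n then i else 2*n - i)"

definition phi :: "nat \<Rightarrow> nat \<Rightarrow> nat" where
  "phi n i = 2*n - i"

definition elab :: "nat \<Rightarrow> nat \<Rightarrow> nat \<Rightarrow> nat list" where
  "elab n k m =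
    (if m < n \<or> k > n then [k..<m+1]
     else if k < n - 1 \<and> n - 1 < m then [k..<n-1] @ [n] @ [n+1..<m+1]
     else if k = n - 1 \<and> n - 1 < m then [n] @ [n+1..<m+1]
     else if k = n then n # [n+2..<m+1]
     else [])"

fun repl :: "nat \<Rightarrow> nat list \<Rightarrow> nat list" where
  "repl n (a # b # xs) = (if a = n \<and> b = n + 1 then (n - 1) # n # xs else a # repl n (b # xs))"
| "repl n xs = xs"

definition ew :: "nat \<Rightarrow> nat \<Rightarrow> nat \<Rightarrow> nat list" where
  "ew n k m = map (ltr n) (elab n k m)"

definition ew' :: "nat \<Rightarrow> nat \<Rightarrow> nat \<Rightarrow> nat list" where
  "ew' n k m = map (ltr n) (repl n (elab n k m))"

text \<open>The bracketed element e[k,m], evaluated in Sh (image under x_i \<mapsto> (x_i)).\<close>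
definition ebr :: "nat \<Rightarrow> 'k::field \<Rightarrow> (nat \<Rightarrow> nat \<Rightarrow> 'k) \<Rightarrow> nat \<Rightarrow> nat \<Rightarrow> 'k sh" where
  "ebr n q P k m =
    (if m < phi n k then leftb P (ew n k m)
     else if m > phi n k then rightb P (ew n k m)
     else (let A = leftb P (ew n k (m - 1)); xm = [ltr n m] in
           sh_add (sh_mult P A (comon xm))
                  (sh_scale (- inverse q * pw P (ew n k (m - 1)) xm) (sh_mult P (comon xm) A))))"

definition so_params :: "nat \<Rightarrow> 'k::field \<Rightarrow> (nat \<Rightarrow> nat \<Rightarrow> 'k) \<Rightarrow> bool" where
  "so_params n q P \<longleftrightarrow> 3 \<le> n \<and> q \<noteq> 0 \<and> q \<noteq> -1 \<and>
     (\<forall>i\<in>{1..n}. \<forall>j\<in>{1..n}. P i j \<noteq> 0) \<and>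
     (\<forall>i\<in>{1..n}. P i i = q) \<and>
     (\<forall>i. 1 < i \<and> i < n \<longrightarrow> P i (i - 1) * P (i - 1) i = inverse q) \<and>
     P (n - 2) n * P n (n - 2) = inverse q \<and>
     P (n - 1) n * P n (n - 1) = 1 \<and>
     (\<forall>i j. 1 \<le> i \<and> i < j \<and> j \<le> n \<and> j > i + 1 \<and> (i, j) \<noteq> (n - 2, n)
            \<longrightarrow> P i j * P j i = 1)"

end

theory Submission imports Defs begin


lemma nths_cong_idx:
  "(\<And>i. i < length xs \<Longrightarrow> (i \<in> A) = (i \<in> B)) \<Longrightarrow> nths xs A = nths xs B"
proof (induction xs arbitrary: A B)
  case Nil then show ?case by simp
next
  case (Cons a xs)
  have "nths xs {j. Suc j \<in> A} = nths xs {j. Suc j \<in> B}"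
    using Cons.prems by (intro Cons.IH) auto
  moreover have "(0 \<in> A) = (0 \<in> B)" using Cons.prems by auto
  ultimately show ?case by (simp add: nths_Cons)
qed

lemma nths_del: "t < length w \<Longrightarrow> nths w (- {t}) = take t w @ drop (Suc t) w"
proof (induction w arbitrary: t)
  case Nil then show ?case by simp
next
  case (Cons a w)
  show ?case
  proof (cases t)
    case 0
    then have "{j. Suc j \<in> - {t}} = UNIV" by auto
    then show ?thesis using 0 by (simp add: nths_Cons nths_all)
  next
    case (Suc t')
    then have "{j. Suc j \<in> - {t}} = - {t'}" by auto
    then show ?thesis using Suc Cons by (simp add: nths_Cons)
  qed
qed

lemma nths_single: "t < length w \<Longrightarrow> nths w {t} = [w!t]"
proof (induction w arbitrary: t)
  case Nil then show ?case by simp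
next
  case (Cons a w)
  show ?case
  proof (cases t)
    case 0
    then have "{j. Suc j \<in> {t}} = {}" by auto
    then show ?thesis using 0 by (simp add: nths_Cons)
  next
    case (Suc t')
    then have "{j. Suc j \<in> {t}} = {t'}" by auto
    then show ?thesis using Suc Cons by (simp add: nths_Cons)
  qed
qed

lemma prod_list_drop_nth:
  "prod_list (map f (drop s w)) = (\<Prod>i\<in>{s..<length w}. f (w!i))"
proof (induction w arbitrary: s)
  case Nil then show ?case by simp
next
  case (Cons a w)
  show ?case
  proof (cases s)
    case 0
    have "(\<Prod>i\<in>{0..<Suc (length w)}. f ((a#w)!i)) = f a * (\<Prod>i\<in>{0..<length w}. f (w!i))"
      by (subst prod.atLeast0_lessThan_Suc_shift) simp
    then show ?thesis using 0 Cons.IH[of 0] by simp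
  next
    case (Suc s')
    have "(\<Prod>i\<in>{Suc s'..<Suc (length w)}. f ((a#w)!i)) = (\<Prod>i\<in>{s'..<length w}. f (w!i))"
      by (subst prod.shift_bounds_Suc_ivl) simp
    then show ?thesis using Suc Cons.IH[of s'] by simp
  qed
qed

lemma prod_list_take_nth:
  "prod_list (map f (take s w)) = (\<Prod>i\<in>{0..<min s (length w)}. f (w!i))"
proof (induction w arbitrary: s)
  case Nil then show ?case by simp
next
  case (Cons a w)
  show ?case
  proof (cases s)
    case 0 then show ?thesis by simp
  next
    case (Suc s')
    have "(\<Prod>i\<in>{0..<Suc (min s' (length w))}. f ((a#w)!i)) = f a * (\<Prod>i\<in>{0..<min s' (length w)}. f (w!i))"
      by (subst prod.atLeast0_lessThan_Suc_shift) simp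
    then show ?thesis using Suc Cons.IH[of s'] by simp
  qed
qed




fun isum :: "(nat list \<Rightarrow> nat list \<Rightarrow> 'k::field) \<Rightarrow> nat \<Rightarrow> nat list \<Rightarrow> nat list \<Rightarrow> 'k sh" where
  "isum c x p [] = sh_scale (c p []) (comon (p @ [x]))"
| "isum c x p (y # ys) = sh_add (sh_scale (c p (y # ys)) (comon (p @ x # y # ys))) (isum c x (p @ [y]) ys)"

definition insw :: "nat \<Rightarrow> nat \<Rightarrow> nat list \<Rightarrow> nat list" where
  "insw t x a = take t a @ x # drop t a"

lemma isum_eq: "isum c x p a = (\<lambda>w. \<Sum>t\<in>{..length a}. if p @ insw t x a = w then c (p @ take t a) (drop t a) else 0)"
proof (induction a arbitrary: p)
  case Nil then show ?case by (auto simp: sh_scale_def comon_def insw_def fun_eq_iff)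
next
  case (Cons y ys)
  show ?case
    apply (simp only: isum.simps Cons.IH length_Cons sum.atMost_Suc_shift)
    apply (auto simp: sh_scale_def sh_add_def comon_def insw_def fun_eq_iff intro!: sum.cong)
    done
qed

lemma ins_del:
  assumes "t < length w"
  shows "(insw t x a = w) \<longleftrightarrow> (w!t = x \<and> take t w @ drop (Suc t) w = a)"
proof
  assume h: "insw t x a = w"
  then have L: "length w = Suc (length a)" by (auto simp: insw_def)
  with assms have ta: "t \<le> length a" by simp
  have "w!t = x" using h ta by (auto simp: insw_def nth_append)
  moreover have "take t w = take t a" using h ta by (auto simp: insw_def)
  moreover have "drop (Suc t) w = drop t a" using h ta by (auto simp: insw_def)
  ultimately show "w!t = x \<and> take t w @ drop (Suc t) w = a" by simp
next
  assume h: "w!t = x \<and> take t w @ drop (Suc t) w = a"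
  then have "take t a = take t w" "drop t a = drop (Suc t) w" using assms by auto
  then show "insw t x a = w" using h assms unfolding insw_def
    by (metis id_take_nth_drop)
qed

lemma pow_sum_compl_single:
  assumes "finite U" and "\<And>S. S \<subseteq> U \<Longrightarrow> h S \<noteq> 0 \<Longrightarrow> card (U - S) = 1"
  shows "(\<Sum>S\<in>Pow U. h S) = (\<Sum>t\<in>U. h (U - {t}))"
proof -
  have inj: "inj_on (\<lambda>t. U - {t}) U" by (auto simp: inj_on_def)
  have "(\<Sum>t\<in>U. h (U - {t})) = (\<Sum>S\<in>(\<lambda>t. U - {t}) ` U. h S)"
    by (simp add: sum.reindex[OF inj])
  also have "\<dots> = (\<Sum>S\<in>Pow U. h S)"
  proof (rule sum.mono_neutral_left)
    show "finite (Pow U)" using assms by simp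
    show "(\<lambda>t. U - {t}) ` U \<subseteq> Pow U" by auto
    show "\<forall>S\<in>Pow U - (\<lambda>t. U - {t}) ` U. h S = 0"
    proof
      fix S assume S: "S \<in> Pow U - (\<lambda>t. U - {t}) ` U"
      show "h S = 0"
      proof (rule ccontr)
        assume "h S \<noteq> 0"
        then have "card (U - S) = 1" using assms S by auto
        then obtain t where "U - S = {t}" by (auto simp: card_Suc_eq)
        then have "t \<in> U" "S = U - {t}" using S by auto
        then show False using S by auto
      qed
    qed
  qed
  finally show ?thesis by simp
qed

lemma pow_sum_single:
  assumes "finite U" and "\<And>S. S \<subseteq> U \<Longrightarrow> h S \<noteq> 0 \<Longrightarrow> card S = 1"
  shows "(\<Sum>S\<in>Pow U. h S) = (\<Sum>t\<in>U. h {t})"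
proof -
  have inj: "inj_on (\<lambda>t. {t}) U" by (auto simp: inj_on_def)
  have "(\<Sum>t\<in>U. h {t}) = (\<Sum>S\<in>(\<lambda>t. {t}) ` U. h S)"
    by (simp add: sum.reindex[OF inj])
  also have "\<dots> = (\<Sum>S\<in>Pow U. h S)"
  proof (rule sum.mono_neutral_left)
    show "finite (Pow U)" using assms by simp
    show "(\<lambda>t. {t}) ` U \<subseteq> Pow U" by auto
    show "\<forall>S\<in>Pow U - (\<lambda>t. {t}) ` U. h S = 0"
    proof
      fix S assume S: "S \<in> Pow U - (\<lambda>t. {t}) ` U"
      show "h S = 0"
      proof (rule ccontr)
        assume "h S \<noteq> 0"
        then have "card S = 1" using assms S by auto
        then obtain t where "S = {t}" by (auto simp: card_Suc_eq)
        then show False using S by auto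
      qed
    qed
  qed
  finally show ?thesis by simp
qed

lemma len_nths_sub: "S \<subseteq> {0..<length w} \<Longrightarrow> length (nths w S) = card S"
proof -
  assume "S \<subseteq> {0..<length w}"
  then have "{i. i < length w \<and> i \<in> S} = S" by auto
  then show ?thesis by (simp add: length_nths)
qed

lemma sum_ins_reindex:
  fixes g :: "nat \<Rightarrow> 'k::field"
  assumes "\<And>t. insw t x a \<noteq> w \<Longrightarrow> g t = 0"
  shows "(\<Sum>t\<in>{..length a}. g t) = (\<Sum>t\<in>{..<length w}. g t)"
proof -
  have "(\<Sum>t\<in>{..length a}. g t) = (\<Sum>t\<in>{..length a} \<union> {..<length w}. g t)"
  proof (rule sum.mono_neutral_left)
    show "\<forall>i\<in>{..length a} \<union> {..<length w} - {..length a}. g i = 0"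
    proof
      fix i assume i: "i \<in> {..length a} \<union> {..<length w} - {..length a}"
      show "g i = 0"
      proof (rule ccontr)
        assume "g i \<noteq> 0"
        then have "insw i x a = w" using assms by blast
        then have "length w = Suc (length a)" by (auto simp: insw_def)
        then show False using i by auto
      qed
    qed
  qed auto
  also have "\<dots> = (\<Sum>t\<in>{..<length w}. g t)"
  proof (rule sum.mono_neutral_right)
    show "\<forall>i\<in>{..length a} \<union> {..<length w} - {..<length w}. g i = 0"
    proof
      fix i assume i: "i \<in> {..length a} \<union> {..<length w} - {..<length w}"
      show "g i = 0"
      proof (rule ccontr)
        assume "g i \<noteq> 0"
        then have "insw i x a = w" using assms by blast
        then have "length w = Suc (length a)" by (auto simp: insw_def)
        then show False using i by auto
      qed
    qed
  qed auto
  finally show ?thesis .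
qed

lemma K1: "sh_mult P (comon a) (comon [x]) = isum (\<lambda>p s. prod_list (map (\<lambda>y. inverse (P x y)) s)) x [] a"
proof (rule ext)
  fix w :: "nat list"
  define U where "U = {0..<length w}"
  define h where "h S = comon a (nths w S) * comon [x] (nths w (U - S)) * sh_coef P w S" for S
  have "sh_mult P (comon a) (comon [x]) w = (\<Sum>S\<in>Pow U. h S)"
    by (simp add: sh_mult_def h_def U_def)
  also have "\<dots> = (\<Sum>t\<in>U. h (U - {t}))"
  proof (rule pow_sum_compl_single)
    fix S assume S: "S \<subseteq> U" "h S \<noteq> 0"
    then have "nths w (U - S) = [x]" by (auto simp: h_def comon_def split: if_splits)
    then have "length (nths w (U - S)) = 1" by simp
    then show "card (U - S) = 1" by (subst (asm) len_nths_sub) (auto simp: U_def)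
  qed (simp add: U_def)
  also have "\<dots> = (\<Sum>t\<in>{..<length w}. if insw t x a = w then prod_list (map (\<lambda>y. inverse (P x y)) (drop t a)) else 0)"
  proof (rule sum.cong)
    show "U = {..<length w}" by (auto simp: U_def)
  next
    fix t assume t: "t \<in> {..<length w}"
    then have tU: "t \<in> U" by (simp add: U_def)
    have e1: "U - (U - {t}) = {t}" using tU by auto
    have e2: "nths w (U - {t}) = take t w @ drop (Suc t) w"
      using t by (subst nths_cong_idx[of w _ "-{t}"]) (auto simp: U_def nths_del)
    have "sh_coef P w (U - {t}) = (\<Prod>i\<in>U - {t}. if t < i then inverse (P (w!t) (w!i)) else 1)"
      unfolding sh_coef_def U_def[symmetric] e1 by simp
    also have "\<dots> = (\<Prod>i\<in>{i\<in>U - {t}. t < i}. inverse (P (w!t) (w!i)))"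
      by (subst prod.inter_filter) (simp_all add: U_def)
    also have "{i\<in>U - {t}. t < i} = {Suc t..<length w}" by (auto simp: U_def)
    finally have e3: "sh_coef P w (U - {t}) = (\<Prod>i\<in>{Suc t..<length w}. inverse (P (w!t) (w!i)))" .
    show "h (U - {t}) = (if insw t x a = w then prod_list (map (\<lambda>y. inverse (P x y)) (drop t a)) else 0)"
    proof (cases "insw t x a = w")
      case True
      then have c: "w!t = x" "take t w @ drop (Suc t) w = a" using ins_del t by auto
      then have "drop t a = drop (Suc t) w" using t by auto
      then show ?thesis using True c e1 e2 e3 t
        by (simp add: h_def comon_def nths_single prod_list_drop_nth)
    next
      case False
      then have "\<not> (w!t = x \<and> take t w @ drop (Suc t) w = a)" using ins_del t by auto
      then show ?thesis using False e1 e2 t by (auto simp: h_def comon_def nths_single)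
    qed
  qed
  also have "\<dots> = (\<Sum>t\<in>{..length a}. if insw t x a = w then prod_list (map (\<lambda>y. inverse (P x y)) (drop t a)) else 0)"
    by (rule sum_ins_reindex[of x a w, symmetric]) simp
  also have "\<dots> = isum (\<lambda>p s. prod_list (map (\<lambda>y. inverse (P x y)) s)) x [] a w"
    by (simp add: isum_eq)
  finally show "sh_mult P (comon a) (comon [x]) w = isum (\<lambda>p s. prod_list (map (\<lambda>y. inverse (P x y)) s)) x [] a w" .
qed

lemma K2: "sh_mult P (comon [x]) (comon a) = isum (\<lambda>p s. prod_list (map (\<lambda>y. inverse (P y x)) p)) x [] a"
proof (rule ext)
  fix w :: "nat list"
  define U where "U = {0..<length w}"
  define h where "h S = comon [x] (nths w S) * comon a (nths w (U - S)) * sh_coef P w S" for S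
  have "sh_mult P (comon [x]) (comon a) w = (\<Sum>S\<in>Pow U. h S)"
    by (simp add: sh_mult_def h_def U_def)
  also have "\<dots> = (\<Sum>t\<in>U. h {t})"
  proof (rule pow_sum_single)
    fix S assume S: "S \<subseteq> U" "h S \<noteq> 0"
    then have "nths w S = [x]" by (auto simp: h_def comon_def split: if_splits)
    then have "length (nths w S) = 1" by simp
    then show "card S = 1" using S by (subst (asm) len_nths_sub) (auto simp: U_def)
  qed (simp add: U_def)
  also have "\<dots> = (\<Sum>t\<in>{..<length w}. if insw t x a = w then prod_list (map (\<lambda>y. inverse (P y x)) (take t a)) else 0)"
  proof (rule sum.cong)
    show "U = {..<length w}" by (auto simp: U_def)
  next
    fix t assume t: "t \<in> {..<length w}"
    then have tU: "t \<in> U" by (simp add: U_def)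
    have e2: "nths w (U - {t}) = take t w @ drop (Suc t) w"
      using t by (subst nths_cong_idx[of w _ "-{t}"]) (auto simp: U_def nths_del)
    have "sh_coef P w {t} = (\<Prod>i\<in>U - {t}. if i < t then inverse (P (w!i) (w!t)) else 1)"
      by (simp add: sh_coef_def U_def[symmetric])
    also have "\<dots> = (\<Prod>i\<in>{i\<in>U - {t}. i < t}. inverse (P (w!i) (w!t)))"
      by (subst prod.inter_filter) (simp_all add: U_def)
    also have "{i\<in>U - {t}. i < t} = {0..<t}" using t by (auto simp: U_def)
    finally have e3: "sh_coef P w {t} = (\<Prod>i\<in>{0..<t}. inverse (P (w!i) (w!t)))" .
    show "h {t} = (if insw t x a = w then prod_list (map (\<lambda>y. inverse (P y x)) (take t a)) else 0)"
    proof (cases "insw t x a = w")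
      case True
      then have c: "w!t = x" "take t w @ drop (Suc t) w = a" using ins_del t by auto
      then have "take t a = take t w" using t by auto
      then show ?thesis using True c e2 e3 t
        by (simp add: h_def comon_def nths_single prod_list_take_nth min_def)
    next
      case False
      then have "\<not> (w!t = x \<and> take t w @ drop (Suc t) w = a)" using ins_del t by auto
      then show ?thesis using False e2 t by (auto simp: h_def comon_def nths_single)
    qed
  qed
  also have "\<dots> = (\<Sum>t\<in>{..length a}. if insw t x a = w then prod_list (map (\<lambda>y. inverse (P y x)) (take t a)) else 0)"
    by (rule sum_ins_reindex[of x a w, symmetric]) simp
  also have "\<dots> = isum (\<lambda>p s. prod_list (map (\<lambda>y. inverse (P y x)) p)) x [] a w"
    unfolding isum_eq by (intro sum.cong refl) simp
  finally show "sh_mult P (comon [x]) (comon a) w = isum (\<lambda>p s. prod_list (map (\<lambda>y. inverse (P y x)) p)) x [] a w" .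
qed




abbreviation zsh :: "'k::field sh" where "zsh \<equiv> (\<lambda>_. 0)"

lemma sh_add_zero[simp]: "sh_add f zsh = f" "sh_add zsh f = f"
  by (auto simp: sh_add_def)
lemma sh_scale_zero[simp]: "sh_scale 0 f = zsh" "sh_scale c zsh = zsh"
  by (auto simp: sh_scale_def)
lemma sh_add_scale_merge:
  "sh_add (sh_scale c1 f) (sh_add (sh_scale c2 f) g) = sh_add (sh_scale (c1+c2) f) g"
  "sh_add (sh_scale c1 f) (sh_scale c2 f) = sh_scale (c1+c2) f"
  by (auto simp: sh_add_def sh_scale_def fun_eq_iff algebra_simps)
lemma sh_scale_scale[simp]: "sh_scale a (sh_scale b f) = sh_scale (a*b) f"
  by (auto simp: sh_scale_def)
lemma sh_scale_add: "sh_scale a (sh_add f g) = sh_add (sh_scale a f) (sh_scale a g)"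
  by (auto simp: sh_scale_def sh_add_def fun_eq_iff algebra_simps)

lemma isum_cong:
  "(\<And>t. t \<le> length a \<Longrightarrow> c1 (p @ take t a) (drop t a) = c2 (p @ take t a) (drop t a))
   \<Longrightarrow> isum c1 x p a = isum c2 x p a"
proof (induction a arbitrary: p)
  case Nil
  then show ?case using Nil[of 0] by simp
next
  case (Cons y ys)
  have "isum c1 x (p @ [y]) ys = isum c2 x (p @ [y]) ys"
    using Cons.prems[of "Suc _"] by (intro Cons.IH) auto
  then show ?case using Cons.prems[of 0] by simp
qed

lemma isum_lin:
  "sh_add (isum c1 x p a) (sh_scale k (isum c2 x p a)) = isum (\<lambda>p s. c1 p s + k * c2 p s) x p a"
proof (induction a arbitrary: p)
  case Nil then show ?case by (auto simp: sh_add_def sh_scale_def fun_eq_iff algebra_simps)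
next
  case (Cons y ys)
  then show ?case
    by (simp del: isum.simps(2) add: isum.simps(2)[of c1] isum.simps(2)[of c2] isum.simps(2)[of "\<lambda>p s. c1 p s + k * c2 p s"])
      (auto simp: sh_add_def sh_scale_def fun_eq_iff algebra_simps)
qed

lemma isum_skip:
  "(\<And>i. i < length u \<Longrightarrow> c (p @ take i u) (drop i u @ v) = 0)
   \<Longrightarrow> isum c x p (u @ v) = isum c x (p @ u) v"
proof (induction u arbitrary: p)
  case Nil then show ?case by simp
next
  case (Cons y ys)
  have "isum c x (p @ [y]) (ys @ v) = isum c x ((p @ [y]) @ ys) v"
    using Cons.prems[of "Suc _"] by (intro Cons.IH) auto
  then show ?case using Cons.prems[of 0] by simp
qed

lemma isum_zero:
  "(\<And>i. i \<le> length v \<Longrightarrow> c (p @ take i v) (drop i v) = 0) \<Longrightarrow> isum c x p v = zsh"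
proof -
  assume h: "\<And>i. i \<le> length v \<Longrightarrow> c (p @ take i v) (drop i v) = 0"
  have "isum c x p (v @ []) = isum c x (p @ v) []"
    using h by (intro isum_skip) auto
  then show ?thesis using h[of "length v"] by simp
qed

lemma isum_last:
  "(\<And>i. i < length v \<Longrightarrow> c (p @ take i v) (drop i v) = 0)
   \<Longrightarrow> isum c x p v = sh_scale (c (p @ v) []) (comon (p @ v @ [x]))"
proof -
  assume h: "\<And>i. i < length v \<Longrightarrow> c (p @ take i v) (drop i v) = 0"
  have "isum c x p (v @ []) = isum c x (p @ v) []"
    using h by (intro isum_skip) auto
  then show ?thesis by simp
qed

lemma isum_pair:
  "isum c x p (x # y # w) = sh_add (sh_scale (c p (x#y#w) + c (p@[x]) (y#w)) (comon (p @ x # x # y # w)))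
      (isum c x (p @ [x, y]) w)"
  by (simp add: sh_add_scale_merge(1)[symmetric])

lemma isum_pair1:
  "isum c x p [x] = sh_scale (c p [x] + c (p@[x]) []) (comon (p @ [x, x]))"
  by (simp add: sh_add_scale_merge(2)[symmetric])

definition Ecf :: "(nat \<Rightarrow> nat \<Rightarrow> 'k::field) \<Rightarrow> nat \<Rightarrow> nat list \<Rightarrow> 'k" where
  "Ecf P x s = prod_list (map (\<lambda>y. P y x) s)"
definition Epf :: "(nat \<Rightarrow> nat \<Rightarrow> 'k::field) \<Rightarrow> nat \<Rightarrow> nat list \<Rightarrow> 'k" where
  "Epf P x s = prod_list (map (\<lambda>y. P x y) s)"
definition bpl :: "(nat \<Rightarrow> nat \<Rightarrow> 'k::field) \<Rightarrow> nat \<Rightarrow> nat list \<Rightarrow> 'k" where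
  "bpl P x s = prod_list (map (\<lambda>y. P x y * P y x) s)"
definition cL :: "(nat \<Rightarrow> nat \<Rightarrow> 'k::field) \<Rightarrow> 'k \<Rightarrow> nat \<Rightarrow> nat list \<Rightarrow> nat list \<Rightarrow> 'k" where
  "cL P lam x = (\<lambda>p s. Ecf P x s * (inverse (bpl P x s) - lam))"
definition cR :: "(nat \<Rightarrow> nat \<Rightarrow> 'k::field) \<Rightarrow> nat \<Rightarrow> nat list \<Rightarrow> nat list \<Rightarrow> 'k" where
  "cR P x = (\<lambda>p s. Epf P x p * (inverse (bpl P x p) - 1))"
definition neutral :: "(nat \<Rightarrow> nat \<Rightarrow> 'k::field) \<Rightarrow> nat \<Rightarrow> nat list \<Rightarrow> bool" where
  "neutral P x l = (\<forall>y\<in>set l. P x y * P y x = 1)"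

lemma Ecf_simps[simp]: "Ecf P x [] = 1" "Ecf P x (y#s) = P y x * Ecf P x s" "Ecf P x (s@t) = Ecf P x s * Ecf P x t"
  by (auto simp: Ecf_def)
lemma Epf_simps[simp]: "Epf P x [] = 1" "Epf P x (y#s) = P x y * Epf P x s" "Epf P x (s@t) = Epf P x s * Epf P x t"
  by (auto simp: Epf_def)
lemma bpl_simps[simp]: "bpl P x [] = 1" "bpl P x (y#s) = P x y * P y x * bpl P x s" "bpl P x (s@t) = bpl P x s * bpl P x t"
  by (auto simp: bpl_def)
lemma neutral_bpl: "neutral P x l \<Longrightarrow> bpl P x l = 1"
  by (induction l) (auto simp: neutral_def)
lemma neutral_drop: "neutral P x l \<Longrightarrow> neutral P x (drop i l)"
  by (auto simp: neutral_def dest: in_set_dropD)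
lemma neutral_take: "neutral P x l \<Longrightarrow> neutral P x (take i l)"
  by (auto simp: neutral_def dest: in_set_takeD)
lemma neutral_simps[simp]: "neutral P x []" "neutral P x (y#l) = (P x y * P y x = 1 \<and> neutral P x l)"
  "neutral P x (l1@l2) = (neutral P x l1 \<and> neutral P x l2)" "neutral P x (rev l) = neutral P x l"
  by (auto simp: neutral_def)




lemma drop_app_single: "i < Suc (length u) \<Longrightarrow> drop i (u @ [y]) = drop i u @ [y]"
  by simp

lemma LP:
  assumes q: "q \<noteq> 0" and xx: "P x x = q" and h1: "P x y1 * P y1 x = inverse q" and h2: "P x y2 * P y2 x = inverse q"
    and h3: "P x z * P z x = inverse q" and nu: "neutral P x u0" and nv: "neutral P x v0"
  shows "isum (cL P 1 x) x [] (y1 # u0 @ y2 # x # z # v0) =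
         sh_scale (Ecf P x (y1 # u0 @ y2 # x # z # v0) * (q - 1)) (comon (x # y1 # u0 @ y2 # x # z # v0))"
proof -
  let ?c = "cL P 1 x"
  have bv: "bpl P x v0 = 1" using nv by (rule neutral_bpl)
  have bu: "\<And>i. bpl P x (drop i u0) = 1" using nu by (intro neutral_bpl neutral_drop)
  have s1: "isum ?c x [y1] ((u0 @ [y2]) @ (x # z # v0)) = isum ?c x ([y1] @ (u0 @ [y2])) (x # z # v0)"
  proof (rule isum_skip)
    fix i assume "i < length (u0 @ [y2])"
    then have "drop i (u0 @ [y2]) = drop i u0 @ [y2]" by simp
    then show "?c ([y1] @ take i (u0 @ [y2])) (drop i (u0 @ [y2]) @ x # z # v0) = 0"
      using bu bv q xx h2 h3 by (simp add: cL_def, (simp add: field_simps)?)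
  qed
  have s2: "isum ?c x ([y1] @ u0 @ [y2] @ [x, z]) v0 = zsh"
  proof (rule isum_zero)
    fix i assume "i \<le> length v0"
    show "?c (([y1] @ u0 @ [y2] @ [x, z]) @ take i v0) (drop i v0) = 0"
      using neutral_bpl[OF neutral_drop[OF nv]] by (simp add: cL_def)
  qed
  have s3: "?c ([y1] @ u0 @ [y2]) (x # z # v0) + ?c (([y1] @ u0 @ [y2]) @ [x]) (z # v0) = 0"
    using bv q xx h3 by (simp add: cL_def, (simp add: field_simps)?)
  have "isum ?c x [] (y1 # u0 @ y2 # x # z # v0) =
        sh_add (sh_scale (?c [] (y1 # u0 @ y2 # x # z # v0)) (comon (x # y1 # u0 @ y2 # x # z # v0)))
          (isum ?c x [y1] ((u0 @ [y2]) @ (x # z # v0)))" by simp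
  also have "isum ?c x [y1] ((u0 @ [y2]) @ (x # z # v0)) = zsh"
    unfolding s1 isum_pair using s2 s3 by simp
  also have "?c [] (y1 # u0 @ y2 # x # z # v0) = Ecf P x (y1 # u0 @ y2 # x # z # v0) * (q - 1)"
    using bv bu[of 0] q xx h1 h2 h3 by (simp add: cL_def, (simp add: field_simps)?)
  finally show ?thesis by simp
qed

lemma MP:
  assumes q: "q \<noteq> 0" and xx: "P x x = q" and h1: "P x y1 * P y1 x = inverse q" and h2: "P x y2 * P y2 x = inverse q"
    and nu: "neutral P x u0"
  shows "isum (cL P (inverse q) x) x [] (y1 # u0 @ [y2, x]) =
         sh_scale (Ecf P x (y1 # u0 @ [y2, x]) * (1 - inverse q)) (comon (x # y1 # u0 @ [y2, x]))"
proof -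
  let ?c = "cL P (inverse q) x"
  have bu: "\<And>i. bpl P x (drop i u0) = 1" using nu by (intro neutral_bpl neutral_drop)
  have s1: "isum ?c x [y1] ((u0 @ [y2]) @ [x]) = isum ?c x ([y1] @ (u0 @ [y2])) [x]"
  proof (rule isum_skip)
    fix i assume "i < length (u0 @ [y2])"
    then have "drop i (u0 @ [y2]) = drop i u0 @ [y2]" by simp
    then show "?c ([y1] @ take i (u0 @ [y2])) (drop i (u0 @ [y2]) @ [x]) = 0"
      using bu q xx h2 by (simp add: cL_def, (simp add: field_simps)?)
  qed
  have s3: "?c ([y1] @ u0 @ [y2]) [x] + ?c (([y1] @ u0 @ [y2]) @ [x]) [] = 0"
    using q xx by (simp add: cL_def, (simp add: field_simps)?)
  have "isum ?c x [] (y1 # u0 @ [y2, x]) =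
        sh_add (sh_scale (?c [] (y1 # u0 @ [y2, x])) (comon (x # y1 # u0 @ [y2, x])))
          (isum ?c x [y1] ((u0 @ [y2]) @ [x]))" by simp
  also have "isum ?c x [y1] ((u0 @ [y2]) @ [x]) = zsh"
    unfolding s1 isum_pair1 using s3 by simp
  also have "?c [] (y1 # u0 @ [y2, x]) = Ecf P x (y1 # u0 @ [y2, x]) * (1 - inverse q)"
    using bu[of 0] q xx h1 h2 by (simp add: cL_def, (simp add: field_simps)?)
  finally show ?thesis by simp
qed

lemma RP:
  assumes q: "q \<noteq> 0" and xx: "P x x = q" and h1: "P x y1 * P y1 x = inverse q" and h2: "P x y2 * P y2 x = inverse q"
    and h3: "P x z * P z x = inverse q" and nu: "neutral P x u0" and nv: "neutral P x v0"
  shows "isum (cR P x) x [] (v0 @ z # x # y2 # u0 @ [y1]) =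
         sh_scale (Epf P x (v0 @ z # x # y2 # u0 @ [y1]) * (q - 1)) (comon ((v0 @ z # x # y2 # u0 @ [y1]) @ [x]))"
proof -
  let ?c = "cR P x"
  have bv: "\<And>i. bpl P x (take i v0) = 1" using nv by (intro neutral_bpl neutral_take)
  have bu: "\<And>i. bpl P x (take i u0) = 1" using nu by (intro neutral_bpl neutral_take)
  have bv0: "bpl P x v0 = 1" "bpl P x u0 = 1" using nv nu by (auto intro: neutral_bpl)
  have s1: "isum ?c x [] (v0 @ (z # x # y2 # u0 @ [y1])) = isum ?c x ([] @ v0) (z # x # y2 # u0 @ [y1])"
  proof (rule isum_skip)
    fix i assume "i < length v0"
    show "?c ([] @ take i v0) (drop i v0 @ z # x # y2 # u0 @ [y1]) = 0"
      using bv by (simp add: cR_def)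
  qed
  have s2: "isum ?c x (v0 @ [z, x, y2]) (u0 @ [y1]) = sh_scale (?c ((v0 @ [z, x, y2]) @ u0 @ [y1]) []) (comon ((v0 @ [z, x, y2]) @ (u0 @ [y1]) @ [x]))"
  proof (rule isum_last)
    fix i assume "i < length (u0 @ [y1])"
    then have "take i (u0 @ [y1]) = take i u0" by simp
    then show "?c ((v0 @ [z, x, y2]) @ take i (u0 @ [y1])) (drop i (u0 @ [y1])) = 0"
      using bu bv0 q xx h2 h3 by (simp add: cR_def, (simp add: field_simps)?)
  qed
  have s3: "?c (v0 @ [z]) (x # y2 # u0 @ [y1]) + ?c ((v0 @ [z]) @ [x]) (y2 # u0 @ [y1]) = 0"
    using bv0 q xx h3 by (simp add: cR_def, (simp add: field_simps)?)
  have s4: "?c v0 (z # x # y2 # u0 @ [y1]) = 0" using bv0 by (simp add: cR_def)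
  have "isum ?c x [] (v0 @ z # x # y2 # u0 @ [y1]) = isum ?c x (v0 @ [z]) (x # y2 # u0 @ [y1])"
    using s1 s4 by simp
  also have "\<dots> = sh_scale (?c ((v0 @ [z, x, y2]) @ u0 @ [y1]) []) (comon ((v0 @ [z, x, y2]) @ (u0 @ [y1]) @ [x]))"
    unfolding isum_pair using s2 s3 by simp
  also have "?c ((v0 @ [z, x, y2]) @ u0 @ [y1]) [] = Epf P x (v0 @ z # x # y2 # u0 @ [y1]) * (q - 1)"
    using bv0 q xx h1 h2 h3 by (simp add: cR_def, (simp add: field_simps)?)
  finally show ?thesis by simp
qed

lemma B2L:
  assumes q: "q \<noteq> 0" and h1: "P x y * P y x = 1" and h2: "P x z * P z x = inverse q" and nv: "neutral P x v0"
  shows "isum (cL P 1 x) x [] (y # z # v0) =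
         sh_add (sh_scale (Ecf P x (y # z # v0) * (q - 1)) (comon (x # y # z # v0)))
                (sh_scale (Ecf P x (z # v0) * (q - 1)) (comon (y # x # z # v0)))"
proof -
  let ?c = "cL P 1 x"
  have bv: "bpl P x v0 = 1" using nv by (rule neutral_bpl)
  have s2: "isum ?c x [y, z] v0 = zsh"
  proof (rule isum_zero)
    fix i assume "i \<le> length v0"
    show "?c ([y, z] @ take i v0) (drop i v0) = 0"
      using neutral_bpl[OF neutral_drop[OF nv]] by (simp add: cL_def)
  qed
  show ?thesis using s2 bv q h1 h2 by (simp add: cL_def, (simp add: field_simps)?)
qed

lemma B2R:
  assumes q: "q \<noteq> 0" and h1: "P x y * P y x = 1" and h2: "P x z * P z x = inverse q" and nv: "neutral P x v0"
  shows "isum (cR P x) x [] (v0 @ [z, y]) =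
         sh_add (sh_scale (Epf P x (v0 @ [z]) * (q - 1)) (comon (v0 @ [z, x, y])))
                (sh_scale (Epf P x (v0 @ [z, y]) * (q - 1)) (comon (v0 @ [z, y, x])))"
proof -
  let ?c = "cR P x"
  have bv: "\<And>i. bpl P x (take i v0) = 1" using nv by (intro neutral_bpl neutral_take)
  have bv0: "bpl P x v0 = 1" using nv by (rule neutral_bpl)
  have s1: "isum ?c x [] (v0 @ [z, y]) = isum ?c x ([] @ v0) [z, y]"
  proof (rule isum_skip)
    fix i assume "i < length v0"
    show "?c ([] @ take i v0) (drop i v0 @ [z, y]) = 0"
      using bv by (simp add: cR_def)
  qed
  show ?thesis unfolding s1 using bv0 q h1 h2 by (simp add: cR_def, (simp add: field_simps)?)
qed

lemma CL:
  assumes q: "q \<noteq> 0" and h2: "P x z * P z x = inverse q" and nv: "neutral P x v0"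
  shows "isum (cL P 1 x) x [] (z # v0) = sh_scale (Ecf P x (z # v0) * (q - 1)) (comon (x # z # v0))"
proof -
  let ?c = "cL P 1 x"
  have bv: "bpl P x v0 = 1" using nv by (rule neutral_bpl)
  have s2: "isum ?c x [z] v0 = zsh"
  proof (rule isum_zero)
    fix i assume "i \<le> length v0"
    show "?c ([z] @ take i v0) (drop i v0) = 0"
      using neutral_bpl[OF neutral_drop[OF nv]] by (simp add: cL_def)
  qed
  show ?thesis using s2 bv q h2 by (simp add: cL_def, (simp add: field_simps)?)
qed

lemma CR:
  assumes q: "q \<noteq> 0" and h2: "P x z * P z x = inverse q" and nv: "neutral P x v0"
  shows "isum (cR P x) x [] (v0 @ [z]) = sh_scale (Epf P x (v0 @ [z]) * (q - 1)) (comon (v0 @ [z, x]))"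
proof -
  let ?c = "cR P x"
  have bv: "\<And>i. bpl P x (take i v0) = 1" using nv by (intro neutral_bpl neutral_take)
  have bv0: "bpl P x v0 = 1" using nv by (rule neutral_bpl)
  have s1: "isum ?c x [] (v0 @ [z]) = isum ?c x ([] @ v0) [z]"
  proof (rule isum_skip)
    fix i assume "i < length v0"
    show "?c ([] @ take i v0) (drop i v0 @ [z]) = 0"
      using bv by (simp add: cR_def)
  qed
  show ?thesis unfolding s1 using bv0 q h2 by (simp add: cR_def, (simp add: field_simps)?)
qed

lemma MB:
  assumes q: "q \<noteq> 0" and h1: "P x y * P y x = 1"
  shows "isum (cL P (inverse q) x) x [] [y] =
         sh_add (sh_scale (P y x * (1 - inverse q)) (comon [x, y])) (sh_scale (1 - inverse q) (comon [y, x]))"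
  using q h1 by (simp add: cL_def, (simp add: field_simps)?)




lemma sh_mult_scale1: "sh_mult P (sh_scale c f) g = sh_scale c (sh_mult P f g)"
  by (auto simp: sh_mult_def sh_scale_def fun_eq_iff sum_distrib_left algebra_simps)
lemma sh_mult_scale2: "sh_mult P f (sh_scale c g) = sh_scale c (sh_mult P f g)"
  by (auto simp: sh_mult_def sh_scale_def fun_eq_iff sum_distrib_left algebra_simps)
lemma sh_mult_add1: "sh_mult P (sh_add f g) h = sh_add (sh_mult P f h) (sh_mult P g h)"
  by (auto simp: sh_mult_def sh_add_def fun_eq_iff sum.distrib algebra_simps)
lemma sh_mult_add2: "sh_mult P f (sh_add g h) = sh_add (sh_mult P f g) (sh_mult P f h)"
  by (auto simp: sh_mult_def sh_add_def fun_eq_iff sum.distrib algebra_simps)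

lemmas sh_mult_lin = sh_mult_scale1 sh_mult_scale2 sh_mult_add1 sh_mult_add2

lemma br_comb_left:
  "sh_br P u v (sh_scale al (sh_add (comon a) (sh_scale be (comon a')))) X =
   sh_scale al (sh_add (sh_br P u v (comon a) X) (sh_scale be (sh_br P u v (comon a') X)))"
  by (simp add: sh_br_def sh_mult_lin) (auto simp: sh_add_def sh_scale_def fun_eq_iff algebra_simps)

lemma br_comb_right:
  "sh_br P u v X (sh_scale al (sh_add (comon a) (sh_scale be (comon a')))) =
   sh_scale al (sh_add (sh_br P u v X (comon a)) (sh_scale be (sh_br P u v X (comon a'))))"
  by (simp add: sh_br_def sh_mult_lin) (auto simp: sh_add_def sh_scale_def fun_eq_iff algebra_simps)

lemma tw_comb:
  "sh_add (sh_mult P (sh_scale al (sh_add (comon a) (sh_scale be (comon a')))) X)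
          (sh_scale k (sh_mult P X (sh_scale al (sh_add (comon a) (sh_scale be (comon a')))))) =
   sh_scale al (sh_add (sh_add (sh_mult P (comon a) X) (sh_scale k (sh_mult P X (comon a))))
                 (sh_scale be (sh_add (sh_mult P (comon a') X) (sh_scale k (sh_mult P X (comon a'))))))"
  by (simp add: sh_mult_lin) (auto simp: sh_add_def sh_scale_def fun_eq_iff algebra_simps)

lemma prod_list_map_inverse: "prod_list (map (\<lambda>y. inverse (f y)) s) = inverse (prod_list (map f s) :: 'k::field)"
  by (induction s) (auto simp: inverse_mult_distrib)

lemma L_D:
  "(\<forall>y\<in>set s. P x y \<noteq> 0 \<and> P y x \<noteq> 0) \<Longrightarrow> prod_list (map (\<lambda>y. inverse (P x y)) s) = Ecf P x s * inverse (bpl P x s)"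
  by (induction s) (auto simp: field_simps)
lemma L_Dr:
  "(\<forall>y\<in>set s. P x y \<noteq> 0 \<and> P y x \<noteq> 0) \<Longrightarrow> prod_list (map (\<lambda>y. inverse (P y x)) s) = Epf P x s * inverse (bpl P x s)"
  by (induction s) (auto simp: field_simps)
lemma Ecf_nz: "(\<forall>y\<in>set s. P y x \<noteq> 0) \<Longrightarrow> Ecf P x s \<noteq> 0"
  by (induction s) auto
lemma Epf_nz: "(\<forall>y\<in>set s. P x y \<noteq> 0) \<Longrightarrow> Epf P x s \<noteq> 0"
  by (induction s) auto

lemma pw_Ecf: "pw P u [x] = Ecf P x u"
  by (simp add: pw_def Ecf_def prod_list_drop_nth[of _ 0, simplified] atLeast0LessThan)
lemma pw_Epf: "pw P [x] u = Epf P x u"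
  by (simp add: pw_def Epf_def prod_list_drop_nth[of _ 0, simplified] atLeast0LessThan)

lemma BRL:
  assumes E: "Ecf P x u = Ecf P x a" and nz: "\<forall>y\<in>set a. P x y \<noteq> 0 \<and> P y x \<noteq> 0"
  shows "sh_br P u [x] (comon a) (comon [x]) = isum (cL P 1 x) x [] a"
proof -
  have "sh_br P u [x] (comon a) (comon [x]) =
    isum (\<lambda>p s. prod_list (map (\<lambda>y. inverse (P x y)) s) + (- pw P u [x]) * prod_list (map (\<lambda>y. inverse (P y x)) p)) x [] a"
    by (simp add: sh_br_def K1 K2 isum_lin)
  also have "\<dots> = isum (cL P 1 x) x [] a"
  proof (rule isum_cong)
    fix t assume "t \<le> length a"
    define p s where "p = take t a" and "s = drop t a"
    have a: "a = p @ s" by (simp add: p_def s_def)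
    have nzs: "\<forall>y\<in>set s. P x y \<noteq> 0 \<and> P y x \<noteq> 0" "\<forall>y\<in>set p. P y x \<noteq> 0"
      using nz by (auto simp: a)
    have ep: "Ecf P x p \<noteq> 0" using nzs(2) by (rule Ecf_nz)
    have "prod_list (map (\<lambda>y. inverse (P x y)) s) + (- pw P u [x]) * prod_list (map (\<lambda>y. inverse (P y x)) p)
        = Ecf P x s * inverse (bpl P x s) - Ecf P x p * Ecf P x s * inverse (Ecf P x p)"
      using L_D[OF nzs(1)] E by (simp add: pw_Ecf prod_list_map_inverse a Ecf_def)
    also have "\<dots> = cL P 1 x p s" using ep by (simp add: cL_def field_simps)
    finally show "prod_list (map (\<lambda>y. inverse (P x y)) (drop t a)) + (- pw P u [x]) * prod_list (map (\<lambda>y. inverse (P y x)) ([] @ take t a))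
        = cL P 1 x ([] @ take t a) (drop t a)" by (simp add: p_def s_def)
  qed
  finally show ?thesis .
qed

lemma TW:
  assumes E: "Ecf P x u = Ecf P x a" and nz: "\<forall>y\<in>set a. P x y \<noteq> 0 \<and> P y x \<noteq> 0"
  shows "sh_add (sh_mult P (comon a) (comon [x])) (sh_scale (- inverse q * pw P u [x]) (sh_mult P (comon [x]) (comon a)))
       = isum (cL P (inverse q) x) x [] a"
proof -
  have "sh_add (sh_mult P (comon a) (comon [x])) (sh_scale (- inverse q * pw P u [x]) (sh_mult P (comon [x]) (comon a))) =
    isum (\<lambda>p s. prod_list (map (\<lambda>y. inverse (P x y)) s) + (- inverse q * pw P u [x]) * prod_list (map (\<lambda>y. inverse (P y x)) p)) x [] a"
    by (simp add: K1 K2 isum_lin)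
  also have "\<dots> = isum (cL P (inverse q) x) x [] a"
  proof (rule isum_cong)
    fix t assume "t \<le> length a"
    define p s where "p = take t a" and "s = drop t a"
    have a: "a = p @ s" by (simp add: p_def s_def)
    have nzs: "\<forall>y\<in>set s. P x y \<noteq> 0 \<and> P y x \<noteq> 0" "\<forall>y\<in>set p. P y x \<noteq> 0"
      using nz by (auto simp: a)
    have ep: "Ecf P x p \<noteq> 0" using nzs(2) by (rule Ecf_nz)
    have "prod_list (map (\<lambda>y. inverse (P x y)) s) + (- inverse q * pw P u [x]) * prod_list (map (\<lambda>y. inverse (P y x)) p)
        = Ecf P x s * inverse (bpl P x s) - inverse q * (Ecf P x p * Ecf P x s) * inverse (Ecf P x p)"
      using L_D[OF nzs(1)] E by (simp add: pw_Ecf prod_list_map_inverse a Ecf_def)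
    also have "\<dots> = cL P (inverse q) x p s" using ep by (simp add: cL_def field_simps)
    finally show "prod_list (map (\<lambda>y. inverse (P x y)) (drop t a)) + (- inverse q * pw P u [x]) * prod_list (map (\<lambda>y. inverse (P y x)) ([] @ take t a))
        = cL P (inverse q) x ([] @ take t a) (drop t a)" by (simp add: p_def s_def)
  qed
  finally show ?thesis .
qed

lemma BRR:
  assumes E: "Epf P x u = Epf P x a" and nz: "\<forall>y\<in>set a. P x y \<noteq> 0 \<and> P y x \<noteq> 0"
  shows "sh_br P [x] u (comon [x]) (comon a) = isum (cR P x) x [] a"
proof -
  have "sh_br P [x] u (comon [x]) (comon a) =
    isum (\<lambda>p s. prod_list (map (\<lambda>y. inverse (P y x)) p) + (- pw P [x] u) * prod_list (map (\<lambda>y. inverse (P x y)) s)) x [] a"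
    by (simp add: sh_br_def K1 K2 isum_lin)
  also have "\<dots> = isum (cR P x) x [] a"
  proof (rule isum_cong)
    fix t assume "t \<le> length a"
    define p s where "p = take t a" and "s = drop t a"
    have a: "a = p @ s" by (simp add: p_def s_def)
    have nzs: "\<forall>y\<in>set p. P x y \<noteq> 0 \<and> P y x \<noteq> 0" "\<forall>y\<in>set s. P x y \<noteq> 0"
      using nz by (auto simp: a)
    have es: "Epf P x s \<noteq> 0" using nzs(2) by (rule Epf_nz)
    have "prod_list (map (\<lambda>y. inverse (P y x)) p) + (- pw P [x] u) * prod_list (map (\<lambda>y. inverse (P x y)) s)
        = Epf P x p * inverse (bpl P x p) - Epf P x p * Epf P x s * inverse (Epf P x s)"
      using L_Dr[OF nzs(1)] E by (simp add: pw_Epf prod_list_map_inverse a Epf_def)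
    also have "\<dots> = cR P x p s" using es by (simp add: cR_def field_simps)
    finally show "prod_list (map (\<lambda>y. inverse (P y x)) ([] @ take t a)) + (- pw P [x] u) * prod_list (map (\<lambda>y. inverse (P x y)) (drop t a))
        = cR P x ([] @ take t a) (drop t a)" by (simp add: p_def s_def)
  qed
  finally show ?thesis .
qed




lemma scale_cong: "a = b \<Longrightarrow> sh_scale a f = sh_scale b f" by simp

lemma sh_scale_one[simp]: "sh_scale 1 f = f" by (simp add: sh_scale_def)

fun ppf :: "(nat \<Rightarrow> nat \<Rightarrow> 'k::field) \<Rightarrow> nat list \<Rightarrow> 'k" where
  "ppf P [] = 1"
| "ppf P (y # w) = Epf P y w * ppf P w"

lemma ppf_snoc: "ppf P (w @ [x]) = ppf P w * Ecf P x w"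
  by (induction w) (auto simp: algebra_simps)

lemma Ecf_rev[simp]: "Ecf P x (rev s) = Ecf P x s"
  by (simp add: Ecf_def rev_map[symmetric] prod_list.rev)
lemma Epf_rev[simp]: "Epf P x (rev s) = Epf P x s"
  by (simp add: Epf_def rev_map[symmetric] prod_list.rev)

definition comb :: "'k::field \<Rightarrow> 'k \<Rightarrow> nat list \<Rightarrow> nat list \<Rightarrow> 'k sh" where
  "comb al be a a' = sh_scale al (sh_add (comon a) (sh_scale be (comon a')))"

lemma comb_match:
  "al * c1 = al' \<Longrightarrow> al * c2 = al' * be \<Longrightarrow>
   sh_scale al (sh_add (sh_scale c1 (comon A)) (sh_scale c2 (comon B))) = comb al' be A B"
  by (auto simp: comb_def sh_scale_def sh_add_def fun_eq_iff algebra_simps)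

lemma comb_match2:
  "al * c1 = al' \<Longrightarrow> al * c2 = al' * be \<Longrightarrow>
   sh_scale al (sh_add (sh_scale c2 (comon B)) (sh_scale c1 (comon A))) = comb al' be A B"
  by (auto simp: comb_def sh_scale_def sh_add_def fun_eq_iff algebra_simps)

lemma br_scale_left: "sh_br P u v (sh_scale al f) g = sh_scale al (sh_br P u v f g)"
  by (simp add: sh_br_def sh_mult_lin) (auto simp: sh_add_def sh_scale_def fun_eq_iff algebra_simps)
lemma br_scale_right: "sh_br P u v g (sh_scale al f) = sh_scale al (sh_br P u v g f)"
  by (simp add: sh_br_def sh_mult_lin) (auto simp: sh_add_def sh_scale_def fun_eq_iff algebra_simps)

lemma leftb_snoc: "zs \<noteq> [] \<Longrightarrow> leftb P (zs @ [y]) = sh_br P zs [y] (leftb P zs) (comon [y])"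
  by (cases "rev zs") (auto simp: leftb_def)
lemma leftb_single: "leftb P [y] = comon [y]"
  by (simp add: leftb_def)
lemma rightb_cons: "ys \<noteq> [] \<Longrightarrow> rightb P (y # ys) = sh_br P [y] ys (comon [y]) (rightb P ys)"
  by (cases ys) auto

lemma upt_split: "a \<le> b \<Longrightarrow> b \<le> c \<Longrightarrow> [a..<c] = [a..<b] @ [b..<c]"
  using upt_add_eq_append[of a b "c - b"] by simp

locale SO =
  fixes n :: nat and q :: "'k::field" and P :: "nat \<Rightarrow> nat \<Rightarrow> 'k"
  assumes sp: "so_params n q P"
begin

lemma n3: "3 \<le> n" and q0: "q \<noteq> 0"
  using sp by (auto simp: so_params_def)

lemma nz: "1 \<le> i \<Longrightarrow> i \<le> n \<Longrightarrow> 1 \<le> j \<Longrightarrow> j \<le> n \<Longrightarrow> P i j \<noteq> 0"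
  using sp by (auto simp: so_params_def)

lemma diag: "1 \<le> i \<Longrightarrow> i \<le> n \<Longrightarrow> P i i = q"
  using sp by (auto simp: so_params_def)

lemma bp_q:
  assumes "1 \<le> i" "1 \<le> j" "i \<le> n" "j \<le> n"
    and "(j = Suc i \<and> j < n) \<or> (i = Suc j \<and> i < n) \<or> (i = n - 2 \<and> j = n) \<or> (j = n - 2 \<and> i = n)"
  shows "P i j * P j i = inverse q"
proof -
  have A: "\<And>i. 1 < i \<Longrightarrow> i < n \<Longrightarrow> P i (i - 1) * P (i - 1) i = inverse q"
    and B: "P (n - 2) n * P n (n - 2) = inverse q"
    using sp by (auto simp: so_params_def)
  show ?thesis using assms(5)
  proof (elim disjE conjE)
    assume "j = Suc i" "j < n"
    then show ?thesis using A[of j] assms by (simp add: mult.commute)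
  next
    assume "i = Suc j" "i < n"
    then show ?thesis using A[of i] assms by simp
  next
    assume "i = n - 2" "j = n" then show ?thesis using B by simp
  next
    assume "j = n - 2" "i = n" then show ?thesis using B by (simp add: mult.commute)
  qed
qed

lemma bp_one:
  assumes "1 \<le> i" "1 \<le> j" "i \<le> n" "j \<le> n" "i \<noteq> j"
    and "\<not> (j = Suc i \<and> j < n)" "\<not> (i = Suc j \<and> i < n)" "\<not> (i = n - 2 \<and> j = n)" "\<not> (j = n - 2 \<and> i = n)"
  shows "P i j * P j i = 1"
proof -
  have C: "P (n - 1) n * P n (n - 1) = 1"
    and D: "\<And>i j. 1 \<le> i \<Longrightarrow> i < j \<Longrightarrow> j \<le> n \<Longrightarrow> j > i + 1 \<Longrightarrow> (i, j) \<noteq> (n - 2, n) \<Longrightarrow> P i j * P j i = 1"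
    using sp by (auto simp: so_params_def)
  consider "i < j" | "j < i" using assms(5) by linarith
  then show ?thesis
  proof cases
    case 1
    show ?thesis
    proof (cases "j = Suc i")
      case True
      then have "j = n" "i = n - 1" using assms 1 by auto
      then show ?thesis using C by simp
    next
      case False
      then show ?thesis using D[of i j] assms 1 by auto
    qed
  next
    case 2
    show ?thesis
    proof (cases "i = Suc j")
      case True
      then have "i = n" "j = n - 1" using assms 2 by auto
      then show ?thesis using C by (simp add: mult.commute)
    next
      case False
      then show ?thesis using D[of j i] assms 2 by (auto simp: mult.commute)
    qed
  qed
qed

lemma nzl: "set a \<subseteq> {1..n} \<Longrightarrow> 1 \<le> x \<Longrightarrow> x \<le> n \<Longrightarrow> \<forall>y\<in>set a. P x y \<noteq> 0 \<and> P y x \<noteq> 0"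
  using nz by fastforce

lemma CHL: "1 \<le> k \<Longrightarrow> k \<le> i \<Longrightarrow> i \<le> n - 2 \<Longrightarrow>
  leftb P [k..<Suc i] = sh_scale ((q - 1) ^ (i - k) * ppf P [k..<Suc i]) (comon (rev [k..<Suc i]))"
proof (induction i)
  case 0
  then show ?case by (simp add: leftb_single)
next
  case (Suc i)
  show ?case
  proof (cases "k = Suc i")
    case True then show ?thesis by (simp add: leftb_single)
  next
    case False
    then have step: "1 \<le> k" "k \<le> i" "i < n - 2" using Suc.prems by auto
    have IH: "leftb P [k..<Suc i] = sh_scale ((q - 1) ^ (i - k) * ppf P [k..<Suc i]) (comon (rev [k..<Suc i]))"
      using Suc.IH step by simp
    have e: "[k..<Suc (Suc i)] = [k..<Suc i] @ [Suc i]" using step by simp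
    have r: "rev [k..<Suc i] = i # rev [k..<i]" using step by simp
    have "leftb P [k..<Suc (Suc i)] = sh_br P [k..<Suc i] [Suc i] (leftb P [k..<Suc i]) (comon [Suc i])"
      unfolding e by (rule leftb_snoc) (use step in simp)
    also have "\<dots> = sh_scale ((q - 1) ^ (i - k) * ppf P [k..<Suc i]) (sh_br P [k..<Suc i] [Suc i] (comon (rev [k..<Suc i])) (comon [Suc i]))"
      using IH by (simp add: br_scale_left)
    also have "sh_br P [k..<Suc i] [Suc i] (comon (rev [k..<Suc i])) (comon [Suc i]) = isum (cL P 1 (Suc i)) (Suc i) [] (rev [k..<Suc i])"
      using step n3 by (intro BRL nzl) auto
    also have "\<dots> = sh_scale (Ecf P (Suc i) (i # rev [k..<i]) * (q - 1)) (comon (Suc i # i # rev [k..<i]))"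
      unfolding r using step n3 q0
      by (intro CL) (auto simp: neutral_def intro!: bp_q bp_one)
    also have "\<dots> = sh_scale (Ecf P (Suc i) [k..<Suc i] * (q - 1)) (comon (rev [k..<Suc (Suc i)]))"
    proof -
      have r2: "rev [k..<Suc (Suc i)] = Suc i # i # rev [k..<i]" using step by simp
      show ?thesis by (simp only: r2 r[symmetric] Ecf_rev)
    qed
    finally have L: "leftb P [k..<Suc (Suc i)] = sh_scale ((q - 1) ^ (i - k) * ppf P [k..<Suc i] * (Ecf P (Suc i) [k..<Suc i] * (q - 1))) (comon (rev [k..<Suc (Suc i)]))"
      by (simp only: sh_scale_scale)
    have pe: "ppf P [k..<Suc (Suc i)] = ppf P [k..<Suc i] * Ecf P (Suc i) [k..<Suc i]" by (simp only: e ppf_snoc)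
    have ex: "Suc i - k = Suc (i - k)" using step by simp
    show ?thesis unfolding L pe ex by (rule scale_cong) (simp add: mult_ac)
  qed
qed

end




lemma rev3: "k \<le> z \<Longrightarrow> Suc (Suc z) < b \<Longrightarrow>
  rev [k..<b] = rev [Suc (Suc (Suc z))..<b] @ Suc (Suc z) # Suc z # z # rev [k..<z]"
proof -
  assume a: "k \<le> z" "Suc (Suc z) < b"
  have "[k..<b] = [k..<z] @ [z..<b]" using a by (intro upt_split) auto
  also have "[z..<b] = z # Suc z # Suc (Suc z) # [Suc (Suc (Suc z))..<b]"
    using a by (simp add: upt_conv_Cons)
  finally show ?thesis by simp
qed

context SO begin

definition W :: "nat \<Rightarrow> nat \<Rightarrow> nat list" where
  "W k j = [k..<n-1] @ n # rev [j..<n]"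
definition W' :: "nat \<Rightarrow> nat \<Rightarrow> nat list" where
  "W' k j = [k..<n-1] @ (n-1) # n # rev [j..<n-1]"

lemma revW: "rev (W k j) = [j..<n] @ n # rev [k..<n-1]"
  by (simp add: W_def)
lemma revW': "rev (W' k j) = [j..<n-1] @ n # (n-1) # rev [k..<n-1]"
  by (simp add: W'_def)

lemma rev_upt_top: "j \<le> n - 1 \<Longrightarrow> rev [j..<n] = (n - 1) # rev [j..<n-1]"
  using n3 by (metis Suc_diff_1 less_le_trans not_less_eq_eq rev.simps(2) rev_rev_ident upt_Suc_append zero_less_numeral linorder_not_le order.trans)

lemma Ecf_W': "j \<le> n - 1 \<Longrightarrow> Ecf P x (W' k j) = Ecf P x (W k j)"
  by (simp add: W_def W'_def rev_upt_top mult_ac)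
lemma Epf_W': "j \<le> n - 1 \<Longrightarrow> Epf P x (W' k j) = Epf P x (W k j)"
  by (simp add: W_def W'_def rev_upt_top mult_ac)

lemma setW: "1 \<le> k \<Longrightarrow> 1 \<le> j \<Longrightarrow> set (rev (W k j)) \<subseteq> {1..n} \<and> set (rev (W' k j)) \<subseteq> {1..n}"
  using n3 by (auto simp: W_def W'_def)

lemma W_snoc: "j < n \<Longrightarrow> W k j = W k (Suc j) @ [j]"
  by (simp add: W_def upt_conv_Cons)
lemma W'_snoc: "j < n - 1 \<Longrightarrow> W' k j = W' k (Suc j) @ [j]"
  by (simp add: W'_def upt_conv_Cons)

lemma CHLn: "1 \<le> k \<Longrightarrow> k \<le> n - 2 \<Longrightarrow>
  leftb P ([k..<n-1] @ [n]) = sh_scale ((q - 1) ^ (n - 1 - k) * ppf P ([k..<n-1] @ [n])) (comon (n # rev [k..<n-1]))"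
proof -
  assume k: "1 \<le> k" "k \<le> n - 2"
  have e: "[k..<n-1] = [k..<Suc (n-2)]" using n3 by (simp add: Suc_diff_Suc numeral_2_eq_2)
  have r0: "[k..<n-1] = [k..<n-2] @ [n-2]" by (metis e upt_Suc_append k(2))
  have r: "rev [k..<n-1] = (n-2) # rev [k..<n-2]" unfolding r0 by simp
  have IH: "leftb P [k..<n-1] = sh_scale ((q - 1) ^ (n - 2 - k) * ppf P [k..<n-1]) (comon (rev [k..<n-1]))"
    unfolding e using k by (intro CHL) auto
  have "leftb P ([k..<n-1] @ [n]) = sh_br P [k..<n-1] [n] (leftb P [k..<n-1]) (comon [n])"
    by (rule leftb_snoc) (use k n3 in simp)
  also have "\<dots> = sh_scale ((q - 1) ^ (n - 2 - k) * ppf P [k..<n-1]) (sh_br P [k..<n-1] [n] (comon (rev [k..<n-1])) (comon [n]))"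
    using IH by (simp add: br_scale_left)
  also have "sh_br P [k..<n-1] [n] (comon (rev [k..<n-1])) (comon [n]) = isum (cL P 1 n) n [] (rev [k..<n-1])"
    using k n3 by (intro BRL nzl) auto
  also have "\<dots> = sh_scale (Ecf P n ((n-2) # rev [k..<n-2]) * (q - 1)) (comon (n # (n-2) # rev [k..<n-2]))"
    unfolding r using k n3 q0
    by (intro CL) (auto simp: neutral_def intro!: bp_q bp_one)
  also have "\<dots> = sh_scale (Ecf P n [k..<n-1] * (q - 1)) (comon (n # rev [k..<n-1]))"
    by (simp only: r[symmetric] Ecf_rev)
  finally have L: "leftb P ([k..<n-1] @ [n]) = sh_scale ((q - 1) ^ (n - 2 - k) * ppf P [k..<n-1] * (Ecf P n [k..<n-1] * (q - 1))) (comon (n # rev [k..<n-1]))"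
    by (simp only: sh_scale_scale)
  have ex: "n - 1 - k = Suc (n - 2 - k)" using k n3 by simp
  show ?thesis unfolding L ex ppf_snoc by (rule scale_cong) (simp add: mult_ac)
qed

lemma CHR: "1 \<le> j \<Longrightarrow> j \<le> i \<Longrightarrow> i \<le> n - 1 \<Longrightarrow>
  rightb P (rev [j..<Suc i]) = sh_scale ((q - 1) ^ (i - j) * ppf P (rev [j..<Suc i])) (comon [j..<Suc i])"
proof (induction i)
  case 0
  then show ?case by simp
next
  case (Suc i)
  show ?case
  proof (cases "j = Suc i")
    case True then show ?thesis by simp
  next
    case False
    then have step: "1 \<le> j" "j \<le> i" "i < n - 1" using Suc.prems by auto
    have IH: "rightb P (rev [j..<Suc i]) = sh_scale ((q - 1) ^ (i - j) * ppf P (rev [j..<Suc i])) (comon [j..<Suc i])"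
      using Suc.IH step by simp
    have e: "rev [j..<Suc (Suc i)] = Suc i # rev [j..<Suc i]" using step by simp
    have r: "[j..<Suc i] = [j..<i] @ [i]" using step by simp
    have "rightb P (rev [j..<Suc (Suc i)]) = sh_br P [Suc i] (rev [j..<Suc i]) (comon [Suc i]) (rightb P (rev [j..<Suc i]))"
      unfolding e by (rule rightb_cons) (use step in simp)
    also have "\<dots> = sh_scale ((q - 1) ^ (i - j) * ppf P (rev [j..<Suc i])) (sh_br P [Suc i] (rev [j..<Suc i]) (comon [Suc i]) (comon [j..<Suc i]))"
      using IH by (simp add: br_scale_right)
    also have "sh_br P [Suc i] (rev [j..<Suc i]) (comon [Suc i]) (comon [j..<Suc i]) = isum (cR P (Suc i)) (Suc i) [] [j..<Suc i]"
      using step n3 by (intro BRR nzl) auto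
    also have "\<dots> = sh_scale (Epf P (Suc i) ([j..<i] @ [i]) * (q - 1)) (comon ([j..<i] @ [i, Suc i]))"
      unfolding r using step n3 q0
      by (intro CR) (auto simp: neutral_def intro!: bp_q bp_one)
    also have "\<dots> = sh_scale (Epf P (Suc i) (rev [j..<Suc i]) * (q - 1)) (comon [j..<Suc (Suc i)])"
    proof -
      have r2: "[j..<Suc (Suc i)] = [j..<i] @ [i, Suc i]" using step by simp
      show ?thesis by (simp only: r2 r[symmetric] Epf_rev)
    qed
    finally have L: "rightb P (rev [j..<Suc (Suc i)]) = sh_scale ((q - 1) ^ (i - j) * ppf P (rev [j..<Suc i]) * (Epf P (Suc i) (rev [j..<Suc i]) * (q - 1))) (comon [j..<Suc (Suc i)])"
      by (simp only: sh_scale_scale)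
    have ex: "Suc i - j = Suc (i - j)" using step by simp
    have pe: "ppf P (rev [j..<Suc (Suc i)]) = Epf P (Suc i) (rev [j..<Suc i]) * ppf P (rev [j..<Suc i])"
      by (simp only: e ppf.simps)
    show ?thesis unfolding L ex pe by (rule scale_cong) (simp add: mult_ac)
  qed
qed

end




lemma rev_snoc': "rev (xs @ [x]) = x # rev xs" by simp

context SO begin

lemma bpn1: "P (n-1) n * P n (n-1) = 1" "P n (n-1) * P (n-1) n = 1"
  using sp by (auto simp: so_params_def mult.commute)

lemma LEFT_base: "1 \<le> k \<Longrightarrow> k \<le> n - 2 \<Longrightarrow>
  leftb P (W k (n-1)) = comb ((q-1)^(2*n-(n-1)-k-1) * ppf P (W k (n-1))) (P (n-1) n) (rev (W k (n-1))) (rev (W' k (n-1)))"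
proof -
  assume k: "1 \<le> k" "k \<le> n - 2"
  have e1: "[n-1..<n] = [n-1]"
  proof -
    have "[n-1..<Suc (n-1)] = [n-1]" by simp
    moreover have "Suc (n-1) = n" using n3 by simp
    ultimately show ?thesis by simp
  qed
  have We: "W k (n-1) = ([k..<n-1] @ [n]) @ [n-1]" unfolding W_def e1 by simp
  have rW: "rev (W k (n-1)) = (n-1) # n # rev [k..<n-1]" unfolding W_def e1 by simp
  have rW': "rev (W' k (n-1)) = n # (n-1) # rev [k..<n-1]" by (simp add: W'_def)
  have e: "[k..<n-1] = [k..<Suc (n-2)]" using n3 by (simp add: Suc_diff_Suc numeral_2_eq_2)
  have r0: "[k..<n-1] = [k..<n-2] @ [n-2]" by (metis e upt_Suc_append k(2))
  have r: "rev [k..<n-1] = (n-2) # rev [k..<n-2]" unfolding r0 by simp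
  define al where "al = (q - 1) ^ (n - 1 - k) * ppf P ([k..<n-1] @ [n])"
  have "leftb P (W k (n-1)) = sh_br P ([k..<n-1] @ [n]) [n-1] (leftb P ([k..<n-1] @ [n])) (comon [n-1])"
    unfolding We by (rule leftb_snoc) simp
  also have "\<dots> = sh_scale al (sh_br P ([k..<n-1] @ [n]) [n-1] (comon (n # rev [k..<n-1])) (comon [n-1]))"
    using CHLn[OF k] by (simp add: br_scale_left al_def)
  also have "sh_br P ([k..<n-1] @ [n]) [n-1] (comon (n # rev [k..<n-1])) (comon [n-1]) = isum (cL P 1 (n-1)) (n-1) [] (n # (n-2) # rev [k..<n-2])"
    unfolding r[symmetric] using k n3 by (intro BRL nzl) (auto simp: mult_ac)
  also have "\<dots> = sh_add (sh_scale (Ecf P (n-1) (n # (n-2) # rev [k..<n-2]) * (q - 1)) (comon ((n-1) # n # (n-2) # rev [k..<n-2])))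
                (sh_scale (Ecf P (n-1) ((n-2) # rev [k..<n-2]) * (q - 1)) (comon (n # (n-1) # (n-2) # rev [k..<n-2])))"
    using k n3 q0 by (intro B2L) (auto simp: neutral_def intro!: bp_q bp_one)
  also have "sh_scale al \<dots> = comb ((q-1)^(2*n-(n-1)-k-1) * ppf P (W k (n-1))) (P (n-1) n) (rev (W k (n-1))) (rev (W' k (n-1)))"
    unfolding rW rW' r[symmetric]
  proof (rule comb_match)
    have ex: "2*n-(n-1)-k-1 = Suc (n - 1 - k)" using k n3 by simp
    have pe: "ppf P (W k (n-1)) = ppf P ([k..<n-1] @ [n]) * Ecf P (n-1) ([k..<n-1] @ [n])"
      unfolding We by (rule ppf_snoc)
    show "al * (Ecf P (n - 1) (n # rev [k..<n - 1]) * (q - 1)) = (q - 1) ^ (2 * n - (n - 1) - k - 1) * ppf P (W k (n - 1))"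
      unfolding ex pe al_def by (simp add: mult_ac)
    show "al * (Ecf P (n - 1) (rev [k..<n - 1]) * (q - 1)) = (q - 1) ^ (2 * n - (n - 1) - k - 1) * ppf P (W k (n - 1)) * P (n - 1) n"
      unfolding ex pe al_def using bpn1 by (simp add: mult_ac)
  qed
  finally show ?thesis .
qed

lemma LEFT_step:
  assumes k: "1 \<le> k" "k \<le> z" and zs: "Suc (Suc z) \<le> n - 1"
    and IH: "leftb P (W k (Suc (Suc z))) = comb ((q-1)^(2*n - Suc (Suc z) - k - 1) * ppf P (W k (Suc (Suc z)))) be
               (rev (W k (Suc (Suc z)))) (rev (W' k (Suc (Suc z))))"
  shows "leftb P (W k (Suc z)) = comb ((q-1)^(2*n - Suc z - k - 1) * ppf P (W k (Suc z))) be
               (rev (W k (Suc z))) (rev (W' k (Suc z)))"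
proof -
  define x where "x = Suc z"
  define s where "s = Suc (Suc z)"
  define W1 where "W1 = W k s"
  define W1' where "W1' = W' k s"
  define al where "al = (q-1)^(2*n - s - k - 1) * ppf P W1"
  have xs: "s = Suc x" by (simp add: x_def s_def)
  have Wx: "W k x = W1 @ [x]" unfolding W1_def xs using zs n3 by (intro W_snoc) (auto simp: x_def)
  have Wx': "W' k x = W1' @ [x]" unfolding W1'_def xs using zs n3 by (intro W'_snoc) (auto simp: x_def)
  have xn: "1 \<le> x" "x \<le> n" using zs by (auto simp: x_def)
  have F1: "isum (cL P 1 x) x [] (rev W1) = sh_scale (Ecf P x (rev W1) * (q-1)) (comon (x # rev W1))"
   and F2: "isum (cL P 1 x) x [] (rev W1') = sh_scale (Ecf P x (rev W1') * (q-1)) (comon (x # rev W1'))"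
  proof -
    have pxx: "P x x = q" using xn by (rule diag)
    have pz: "P x z * P z x = inverse q" using k zs by (intro bp_q) (auto simp: x_def)
    have nv: "neutral P x (rev [k..<z])" using k zs n3
      by (auto simp: neutral_def x_def intro!: bp_one)
    consider "s = n - 1" | "s < n - 1" using zs s_def by linarith
    then have "isum (cL P 1 x) x [] (rev W1) = sh_scale (Ecf P x (rev W1) * (q-1)) (comon (x # rev W1))
             \<and> isum (cL P 1 x) x [] (rev W1') = sh_scale (Ecf P x (rev W1') * (q-1)) (comon (x # rev W1'))"
    proof cases
      case 1
      then have hn: "n = Suc (Suc (Suc z))" using n3 by (simp add: s_def)
      have d1: "rev W1 = s # [] @ n # x # z # rev [k..<z]"
        unfolding W1_def revW using k by (simp add: hn s_def x_def)
      have d2: "rev W1' = n # [] @ s # x # z # rev [k..<z]"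
        unfolding W1'_def revW' using k by (simp add: hn s_def x_def)
      have p1: "P x s * P s x = inverse q" "P x n * P n x = inverse q"
        using hn by (auto simp: x_def s_def intro!: bp_q)
      show ?thesis unfolding d1 d2 using q0 pxx p1 pz nv
        by (intro conjI LP) auto
    next
      case 2
      have r3: "rev [k..<n-1] = rev [Suc s..<n-1] @ s # x # z # rev [k..<z]"
        unfolding s_def x_def using k 2 by (intro rev3) (auto simp: s_def)
      have d1: "rev W1 = s # ([Suc s..<n] @ n # rev [Suc s..<n-1]) @ s # x # z # rev [k..<z]"
        unfolding W1_def revW r3 using 2 by (simp add: upt_conv_Cons)
      have d2: "rev W1' = s # ([Suc s..<n-1] @ n # (n-1) # rev [Suc s..<n-1]) @ s # x # z # rev [k..<z]"
        unfolding W1'_def revW' r3 using 2 by (simp add: upt_conv_Cons)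
      have p1: "P x s * P s x = inverse q"
        using 2 by (auto simp: x_def s_def intro!: bp_q)
      have nu1: "neutral P x ([Suc s..<n] @ n # rev [Suc s..<n-1])"
        using 2 k by (auto simp: neutral_def x_def s_def intro!: bp_one)
      have nu2: "neutral P x ([Suc s..<n-1] @ n # (n-1) # rev [Suc s..<n-1])"
        using 2 k by (auto simp: neutral_def x_def s_def intro!: bp_one)
      show ?thesis unfolding d1 d2 using q0 pxx p1 pz nv nu1 nu2
        by (intro conjI LP) auto
    qed
    then show "isum (cL P 1 x) x [] (rev W1) = sh_scale (Ecf P x (rev W1) * (q-1)) (comon (x # rev W1))"
      and "isum (cL P 1 x) x [] (rev W1') = sh_scale (Ecf P x (rev W1') * (q-1)) (comon (x # rev W1'))" by auto
  qed
  have set1: "set (rev W1) \<subseteq> {1..n}" "set (rev W1') \<subseteq> {1..n}"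
    using setW[of k s] k by (auto simp: W1_def W1'_def s_def)
  have EW: "Ecf P x W1' = Ecf P x W1" using zs by (simp add: W1_def W1'_def Ecf_W' s_def)
  have "leftb P (W k x) = sh_br P W1 [x] (leftb P W1) (comon [x])"
    unfolding Wx by (rule leftb_snoc) (simp add: W1_def W_def)
  also have "\<dots> = sh_scale al (sh_add (sh_br P W1 [x] (comon (rev W1)) (comon [x]))
                    (sh_scale be (sh_br P W1 [x] (comon (rev W1')) (comon [x]))))"
    unfolding W1_def W1'_def al_def s_def IH comb_def br_comb_left ..
  also have "sh_br P W1 [x] (comon (rev W1)) (comon [x]) = isum (cL P 1 x) x [] (rev W1)"
    using set1 xn by (intro BRL nzl) auto
  also have "sh_br P W1 [x] (comon (rev W1')) (comon [x]) = isum (cL P 1 x) x [] (rev W1')"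
    using set1 xn EW by (intro BRL nzl) auto
  also have "sh_scale al (sh_add (isum (cL P 1 x) x [] (rev W1)) (sh_scale be (isum (cL P 1 x) x [] (rev W1'))))
     = comb ((q-1)^(2*n - x - k - 1) * ppf P (W k x)) be (rev (W k x)) (rev (W' k x))"
    unfolding F1 F2 sh_scale_scale Wx Wx' rev_snoc'
  proof (rule comb_match)
    have ex: "2*n - x - k - 1 = Suc (2*n - s - k - 1)" using zs k by (simp add: x_def s_def)
    show "al * (Ecf P x (rev W1) * (q - 1)) = (q - 1) ^ (2 * n - x - k - 1) * ppf P (W1 @ [x])"
      unfolding ex al_def ppf_snoc by (simp add: mult_ac)
    show "al * (be * (Ecf P x (rev W1') * (q - 1))) = (q - 1) ^ (2 * n - x - k - 1) * ppf P (W1 @ [x]) * be"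
      unfolding ex al_def ppf_snoc using EW by (simp add: mult_ac)
  qed
  finally show ?thesis by (simp add: x_def)
qed

lemma LEFT: "1 \<le> k \<Longrightarrow> k < j \<Longrightarrow> j \<le> n - 1 \<Longrightarrow>
  leftb P (W k j) = comb ((q-1)^(2*n-j-k-1) * ppf P (W k j)) (P (n-1) n) (rev (W k j)) (rev (W' k j))"
proof (induction "n - 1 - j" arbitrary: j)
  case 0
  then have "j = n - 1" by simp
  then show ?case using LEFT_base[of k] 0 by simp
next
  case (Suc d)
  then obtain z where z: "j = Suc z" by (cases j) auto
  have IH: "leftb P (W k (Suc (Suc z))) = comb ((q-1)^(2*n - Suc (Suc z) - k - 1) * ppf P (W k (Suc (Suc z)))) (P (n-1) n)
               (rev (W k (Suc (Suc z)))) (rev (W' k (Suc (Suc z))))"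
    using Suc z by (intro Suc.hyps) auto
  show ?case unfolding z using Suc z by (intro LEFT_step[OF _ _ _ IH]) auto
qed

end




context SO begin

lemma MID:
  assumes k: "1 \<le> k" "k \<le> n - 2"
  shows "sh_add (sh_mult P (leftb P (W k (Suc k))) (comon [k]))
           (sh_scale (- inverse q * pw P (W k (Suc k)) [k]) (sh_mult P (comon [k]) (leftb P (W k (Suc k))))) =
         comb (inverse q * (q-1)^(2*n-2*k-1) * ppf P (W k k)) (P (n-1) n) (rev (W k k)) (rev (W' k k))"
proof -
  define U where "U = W k (Suc k)"
  define U' where "U' = W' k (Suc k)"
  define al where "al = (q-1)^(2*n - Suc k - k - 1) * ppf P U"
  define be where "be = P (n-1) n"
  have kn: "1 \<le> k" "k \<le> n" using k n3 by auto
  have Wk: "W k k = U @ [k]" unfolding U_def using k n3 by (intro W_snoc) auto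
  have Wk': "W' k k = U' @ [k]" unfolding U'_def using k n3 by (intro W'_snoc) auto
  have L: "leftb P U = comb al be (rev U) (rev U')"
    unfolding U_def U'_def al_def be_def using k by (intro LEFT) auto
  have G: "isum (cL P (inverse q) k) k [] (rev U) = sh_scale (Ecf P k (rev U) * (1 - inverse q)) (comon (k # rev U))
         \<and> isum (cL P (inverse q) k) k [] (rev U') = sh_scale (Ecf P k (rev U') * (1 - inverse q)) (comon (k # rev U'))"
  proof -
    have pxx: "P k k = q" using kn by (rule diag)
    consider "k = n - 2" | "k < n - 2" using k by linarith
    then show ?thesis
    proof cases
      case 1
      then have hn: "n = Suc (Suc k)" using n3 by simp
      have d1: "rev U = Suc k # [] @ [n, k]"
        unfolding U_def revW using k by (simp add: hn)
      have d2: "rev U' = n # [] @ [Suc k, k]"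
        unfolding U'_def revW' using k by (simp add: hn)
      have p1: "P k (Suc k) * P (Suc k) k = inverse q" "P k n * P n k = inverse q"
        using hn k by (auto intro!: bp_q)
      show ?thesis unfolding d1 d2 using q0 pxx p1
        by (intro conjI MP) auto
    next
      case 2
      have r: "rev [k..<n-1] = rev [Suc (Suc k)..<n-1] @ [Suc k, k]"
        using 2 by (simp add: upt_conv_Cons)
      have d1: "rev U = Suc k # ([Suc (Suc k)..<n] @ n # rev [Suc (Suc k)..<n-1]) @ [Suc k, k]"
        unfolding U_def revW r using 2 by (simp add: upt_conv_Cons)
      have d2: "rev U' = Suc k # ([Suc (Suc k)..<n-1] @ n # (n-1) # rev [Suc (Suc k)..<n-1]) @ [Suc k, k]"
        unfolding U'_def revW' r using 2 by (simp add: upt_conv_Cons)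
      have p1: "P k (Suc k) * P (Suc k) k = inverse q"
        using 2 k by (auto intro!: bp_q)
      have nu1: "neutral P k ([Suc (Suc k)..<n] @ n # rev [Suc (Suc k)..<n-1])"
        using 2 k by (auto simp: neutral_def intro!: bp_one)
      have nu2: "neutral P k ([Suc (Suc k)..<n-1] @ n # (n-1) # rev [Suc (Suc k)..<n-1])"
        using 2 k by (auto simp: neutral_def intro!: bp_one)
      show ?thesis unfolding d1 d2 using q0 pxx p1 nu1 nu2
        by (intro conjI MP) auto
    qed
  qed
  have set1: "set (rev U) \<subseteq> {1..n}" "set (rev U') \<subseteq> {1..n}"
    using setW[of k "Suc k"] k by (auto simp: U_def U'_def)
  have EW: "Ecf P k U' = Ecf P k U" using k by (simp add: U_def U'_def Ecf_W')
  have "sh_add (sh_mult P (leftb P U) (comon [k])) (sh_scale (- inverse q * pw P U [k]) (sh_mult P (comon [k]) (leftb P U)))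
     = sh_scale al (sh_add (sh_add (sh_mult P (comon (rev U)) (comon [k])) (sh_scale (- inverse q * pw P U [k]) (sh_mult P (comon [k]) (comon (rev U)))))
                 (sh_scale be (sh_add (sh_mult P (comon (rev U')) (comon [k])) (sh_scale (- inverse q * pw P U [k]) (sh_mult P (comon [k]) (comon (rev U')))))))"
    unfolding L comb_def tw_comb ..
  also have "sh_add (sh_mult P (comon (rev U)) (comon [k])) (sh_scale (- inverse q * pw P U [k]) (sh_mult P (comon [k]) (comon (rev U))))
     = isum (cL P (inverse q) k) k [] (rev U)"
    using set1 kn by (intro TW nzl) auto
  also have "sh_add (sh_mult P (comon (rev U')) (comon [k])) (sh_scale (- inverse q * pw P U [k]) (sh_mult P (comon [k]) (comon (rev U'))))
     = isum (cL P (inverse q) k) k [] (rev U')"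
    using set1 kn EW by (intro TW nzl) auto
  also have "sh_scale al (sh_add (isum (cL P (inverse q) k) k [] (rev U)) (sh_scale be (isum (cL P (inverse q) k) k [] (rev U'))))
     = comb (inverse q * (q-1)^(2*n-2*k-1) * ppf P (W k k)) (P (n-1) n) (rev (W k k)) (rev (W' k k))"
    unfolding G[THEN conjunct1] G[THEN conjunct2] sh_scale_scale Wk Wk' rev_snoc' be_def[symmetric]
  proof (rule comb_match)
    have ex: "2*n-2*k-1 = Suc (2*n - Suc k - k - 1)" using k n3 by simp
    show "al * (Ecf P k (rev U) * (1 - inverse q)) = inverse q * (q - 1) ^ (2 * n - 2 * k - 1) * ppf P (U @ [k])"
      unfolding ex al_def ppf_snoc using q0 by (simp add: field_simps)
    show "al * (be * (Ecf P k (rev U') * (1 - inverse q))) = inverse q * (q - 1) ^ (2 * n - 2 * k - 1) * ppf P (U @ [k]) * be"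
      unfolding ex al_def ppf_snoc using q0 EW by (simp add: field_simps)
  qed
  finally show ?thesis unfolding U_def .
qed

lemma MIDB:
  "sh_add (sh_mult P (comon [n]) (comon [n-1])) (sh_scale (- inverse q * pw P [n] [n-1]) (sh_mult P (comon [n-1]) (comon [n]))) =
   comb (inverse q * (q-1)^(2*n-2*(n-1)-1) * ppf P (W (n-1) (n-1))) (P (n-1) n) (rev (W (n-1) (n-1))) (rev (W' (n-1) (n-1)))"
proof -
  have e1: "[n-1..<n] = [n-1]"
  proof -
    have "[n-1..<Suc (n-1)] = [n-1]" by simp
    moreover have "Suc (n-1) = n" using n3 by simp
    ultimately show ?thesis by metis
  qed
  have w1: "W (n-1) (n-1) = [n, n-1]" unfolding W_def e1 by simp
  have w2: "W' (n-1) (n-1) = [n-1, n]" unfolding W'_def by simp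
  have ex: "2*n-2*(n-1)-1 = 1" using n3 by simp
  have "sh_add (sh_mult P (comon [n]) (comon [n-1])) (sh_scale (- inverse q * pw P [n] [n-1]) (sh_mult P (comon [n-1]) (comon [n])))
     = isum (cL P (inverse q) (n-1)) (n-1) [] [n]"
    using n3 by (intro TW nzl) auto
  also have "\<dots> = sh_add (sh_scale (P n (n-1) * (1 - inverse q)) (comon [n-1, n])) (sh_scale (1 - inverse q) (comon [n, n-1]))"
    using q0 bpn1 by (intro MB) auto
  also have "\<dots> = sh_scale 1 \<dots>" by simp
  also have "\<dots> = comb (inverse q * (q-1)^(2*n-2*(n-1)-1) * ppf P (W (n-1) (n-1))) (P (n-1) n) (rev (W (n-1) (n-1))) (rev (W' (n-1) (n-1)))"
    unfolding w1 w2 ex rev.simps append.simps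
    by (rule comb_match) (use q0 bpn1 in \<open>simp_all add: field_simps\<close>)
  finally show ?thesis .
qed

end




context SO begin

lemma RIGHT_base:
  assumes j: "1 \<le> j" "j \<le> n - 2"
  shows "rightb P (W (n-1) j) = comb ((q-1)^(2*n-j-(n-1)-1) * ppf P (W (n-1) j)) (P (n-1) n) (rev (W (n-1) j)) (rev (W' (n-1) j))"
proof -
  define v0 where "v0 = [j..<n-2]"
  have hn: "Suc (n-1) = n" using n3 by simp
  have w1: "W (n-1) j = n # rev [j..<n]" by (simp add: W_def)
  have rw1: "rev (W (n-1) j) = v0 @ [n-2, n-1, n]"
  proof -
    have "[j..<n] = [j..<n-2] @ [n-2, n-1]"
    proof -
      have "[j..<n] = [j..<n-2] @ [n-2..<n]" using j by (intro upt_split) auto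
      moreover have "[n-2..<n] = [n-2, n-1]" using n3 by (simp add: upt_conv_Cons Suc_diff_Suc numeral_2_eq_2)
      ultimately show ?thesis by simp
    qed
    then show ?thesis unfolding w1 v0_def by simp
  qed
  have rw2: "rev (W' (n-1) j) = v0 @ [n-2, n, n-1]"
  proof -
    have "[j..<n-1] = [j..<n-2] @ [n-2]"
    proof -
      have e: "n - 1 = Suc (n-2)" using n3 by simp
      show ?thesis unfolding e using j by simp
    qed
    then show ?thesis unfolding W'_def v0_def by simp
  qed
  have av: "[j..<n] = v0 @ [n-2, n-1]" using rw1 w1 by simp
  define al where "al = (q-1)^(n-1-j) * ppf P (rev [j..<n])"
  have CH: "rightb P (rev [j..<n]) = sh_scale al (comon [j..<n])"
    using CHR[of j "n-1"] j n3 unfolding hn al_def by simp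
  have "rightb P (W (n-1) j) = sh_br P [n] (rev [j..<n]) (comon [n]) (rightb P (rev [j..<n]))"
    unfolding w1 by (rule rightb_cons) (use j n3 in simp)
  also have "\<dots> = sh_scale al (sh_br P [n] (rev [j..<n]) (comon [n]) (comon [j..<n]))"
    unfolding CH br_scale_right ..
  also have "sh_br P [n] (rev [j..<n]) (comon [n]) (comon [j..<n]) = isum (cR P n) n [] [j..<n]"
    using j n3 by (intro BRR nzl) auto
  also have "\<dots> = sh_add (sh_scale (Epf P n (v0 @ [n-2]) * (q - 1)) (comon (v0 @ [n-2, n, n-1])))
                (sh_scale (Epf P n (v0 @ [n-2, n-1]) * (q - 1)) (comon (v0 @ [n-2, n-1, n])))"
    unfolding av using q0 bpn1 j n3 by (intro B2R) (auto simp: v0_def neutral_def intro!: bp_q bp_one)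
  also have "sh_scale al \<dots> = comb ((q-1)^(2*n-j-(n-1)-1) * ppf P (W (n-1) j)) (P (n-1) n) (rev (W (n-1) j)) (rev (W' (n-1) j))"
    unfolding rw1 rw2
  proof (rule comb_match2)
    have ex: "2*n-j-(n-1)-1 = Suc (n-1-j)" using j n3 by simp
    have pe: "ppf P (W (n-1) j) = Epf P n (v0 @ [n-2, n-1]) * ppf P (rev [j..<n])"
      unfolding w1 av by simp
    show "al * (Epf P n (v0 @ [n - 2, n - 1]) * (q - 1)) = (q - 1) ^ (2 * n - j - (n - 1) - 1) * ppf P (W (n - 1) j)"
      unfolding ex pe al_def by (simp add: mult_ac)
    show "al * (Epf P n (v0 @ [n - 2]) * (q - 1)) = (q - 1) ^ (2 * n - j - (n - 1) - 1) * ppf P (W (n - 1) j) * P (n - 1) n"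
      unfolding ex pe al_def using bpn1 by (simp add: mult_ac)
  qed
  finally show ?thesis .
qed

lemma RIGHT_step:
  assumes j: "1 \<le> j" "j \<le> z" and kn: "Suc z \<le> n - 2"
    and IH: "rightb P (W (Suc (Suc z)) j) = comb ((q-1)^(2*n-j-Suc (Suc z)-1) * ppf P (W (Suc (Suc z)) j)) be
              (rev (W (Suc (Suc z)) j)) (rev (W' (Suc (Suc z)) j))"
  shows "rightb P (W (Suc z) j) = comb ((q-1)^(2*n-j-Suc z-1) * ppf P (W (Suc z) j)) be
              (rev (W (Suc z) j)) (rev (W' (Suc z) j))"
proof -
  define k where "k = Suc z"
  define W1 where "W1 = W (Suc k) j"
  define W1' where "W1' = W' (Suc k) j"
  define al where "al = (q-1)^(2*n-j-Suc k-1) * ppf P W1"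
  have kk: "1 \<le> k" "k \<le> n" using j kn by (auto simp: k_def)
  have Wk: "W k j = k # W1"
    unfolding W1_def W_def using kn by (simp add: k_def upt_conv_Cons)
  have Wk': "W' k j = k # W1'"
    unfolding W1'_def W'_def using kn by (simp add: k_def upt_conv_Cons)
  have F: "isum (cR P k) k [] (rev W1) = sh_scale (Epf P k (rev W1) * (q-1)) (comon (rev W1 @ [k]))
         \<and> isum (cR P k) k [] (rev W1') = sh_scale (Epf P k (rev W1') * (q-1)) (comon (rev W1' @ [k]))"
  proof -
    have pxx: "P k k = q" using kk by (rule diag)
    have pz: "P k z * P z k = inverse q" using j kn by (intro bp_q) (auto simp: k_def)
    have nv: "neutral P k [j..<z]" using j kn n3
      by (auto simp: neutral_def k_def intro!: bp_one)
    have sp3: "[j..<n] = [j..<z] @ z # k # Suc k # [Suc (Suc k)..<n]"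
    proof -
      have "[j..<n] = [j..<z] @ [z..<n]" using j kn by (intro upt_split) auto
      moreover have "[z..<n] = z # k # Suc k # [Suc (Suc k)..<n]" using kn by (simp add: upt_conv_Cons k_def)
      ultimately show ?thesis by simp
    qed
    consider "k = n - 2" | "k < n - 2" using kn k_def by linarith
    then show ?thesis
    proof cases
      case 1
      then have hn: "n = Suc (Suc k)" using n3 by simp
      have d1: "rev W1 = [j..<z] @ z # k # Suc k # [] @ [n]"
        unfolding W1_def revW using j by (simp add: hn k_def)
      have d2: "rev W1' = [j..<z] @ z # k # n # [] @ [Suc k]"
        unfolding W1'_def revW' using j by (simp add: hn k_def)
      have p1: "P k (Suc k) * P (Suc k) k = inverse q" "P k n * P n k = inverse q"
        using hn kk by (auto intro!: bp_q)
      show ?thesis unfolding d1 d2 using q0 pxx p1 pz nv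
        by (intro conjI RP) auto
    next
      case 2
      have r: "rev [Suc k..<n-1] = rev [Suc (Suc k)..<n-1] @ [Suc k]"
        using 2 by (simp add: upt_conv_Cons)
      have sp3': "[j..<n-1] = [j..<z] @ z # k # Suc k # [Suc (Suc k)..<n-1]"
      proof -
        have "[j..<n-1] = [j..<z] @ [z..<n-1]" using j kn by (intro upt_split) auto
        moreover have "[z..<n-1] = z # k # Suc k # [Suc (Suc k)..<n-1]" using 2 by (simp add: upt_conv_Cons k_def)
        ultimately show ?thesis by simp
      qed
      have d1: "rev W1 = [j..<z] @ z # k # Suc k # ([Suc (Suc k)..<n] @ n # rev [Suc (Suc k)..<n-1]) @ [Suc k]"
        unfolding W1_def revW r sp3 by simp
      have d2: "rev W1' = [j..<z] @ z # k # Suc k # ([Suc (Suc k)..<n-1] @ n # (n-1) # rev [Suc (Suc k)..<n-1]) @ [Suc k]"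
        unfolding W1'_def revW' r sp3' by simp
      have p1: "P k (Suc k) * P (Suc k) k = inverse q"
        using 2 kk by (auto intro!: bp_q)
      have nu1: "neutral P k ([Suc (Suc k)..<n] @ n # rev [Suc (Suc k)..<n-1])"
        using 2 kk by (auto simp: neutral_def intro!: bp_one)
      have nu2: "neutral P k ([Suc (Suc k)..<n-1] @ n # (n-1) # rev [Suc (Suc k)..<n-1])"
        using 2 kk by (auto simp: neutral_def intro!: bp_one)
      show ?thesis unfolding d1 d2 using q0 pxx p1 pz nv nu1 nu2
        by (intro conjI RP) auto
    qed
  qed
  have set1: "set (rev W1) \<subseteq> {1..n}" "set (rev W1') \<subseteq> {1..n}"
    using setW[of "Suc k" j] j by (auto simp: W1_def W1'_def)
  have jn: "j \<le> n - 1" using j kn by linarith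
  have EW: "Epf P k W1' = Epf P k W1" unfolding W1_def W1'_def by (rule Epf_W'[OF jn])
  have "rightb P (W k j) = sh_br P [k] W1 (comon [k]) (rightb P W1)"
    unfolding Wk by (rule rightb_cons) (simp add: W1_def W_def)
  also have "\<dots> = sh_scale al (sh_add (sh_br P [k] W1 (comon [k]) (comon (rev W1)))
                    (sh_scale be (sh_br P [k] W1 (comon [k]) (comon (rev W1')))))"
    unfolding W1_def W1'_def al_def k_def IH comb_def br_comb_right ..
  also have "sh_br P [k] W1 (comon [k]) (comon (rev W1)) = isum (cR P k) k [] (rev W1)"
    using set1 kk by (intro BRR nzl) auto
  also have "sh_br P [k] W1 (comon [k]) (comon (rev W1')) = isum (cR P k) k [] (rev W1')"
    using set1 kk EW by (intro BRR nzl) auto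
  also have "sh_scale al (sh_add (isum (cR P k) k [] (rev W1)) (sh_scale be (isum (cR P k) k [] (rev W1'))))
     = comb ((q-1)^(2*n-j-k-1) * ppf P (W k j)) be (rev (W k j)) (rev (W' k j))"
    unfolding F[THEN conjunct1] F[THEN conjunct2] sh_scale_scale Wk Wk' rev.simps(2)
  proof (rule comb_match)
    have ex: "2*n-j-k-1 = Suc (2*n-j-Suc k-1)" using j kn by (simp add: k_def)
    show "al * (Epf P k (rev W1) * (q - 1)) = (q - 1) ^ (2*n-j-k-1) * ppf P (k # W1)"
      unfolding ex al_def by (simp add: mult_ac)
    show "al * (be * (Epf P k (rev W1') * (q - 1))) = (q - 1) ^ (2*n-j-k-1) * ppf P (k # W1) * be"
      unfolding ex al_def using EW by (simp add: mult_ac)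
  qed
  finally show ?thesis by (simp add: k_def)
qed

lemma RIGHT: "1 \<le> j \<Longrightarrow> j < k \<Longrightarrow> k \<le> n - 1 \<Longrightarrow>
  rightb P (W k j) = comb ((q-1)^(2*n-j-k-1) * ppf P (W k j)) (P (n-1) n) (rev (W k j)) (rev (W' k j))"
proof (induction "n - 1 - k" arbitrary: k)
  case 0
  then have "k = n - 1" by simp
  then show ?case using RIGHT_base[of j] 0 by simp
next
  case (Suc d)
  then obtain z where z: "k = Suc z" by (cases k) auto
  have IH: "rightb P (W (Suc (Suc z)) j) = comb ((q-1)^(2*n-j-Suc (Suc z)-1) * ppf P (W (Suc (Suc z)) j)) (P (n-1) n)
              (rev (W (Suc (Suc z)) j)) (rev (W' (Suc (Suc z)) j))"
    using Suc z by (intro Suc.hyps) auto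
  show ?case unfolding z using Suc z by (intro RIGHT_step[OF _ _ _ IH]) auto
qed

end




lemma repl_cons: "a \<noteq> n \<Longrightarrow> repl n (a # ys) = a # repl n ys"
  by (cases ys) auto

lemma repl_app: "(\<forall>x\<in>set xs. x < n) \<Longrightarrow> repl n (xs @ n # Suc n # rest) = xs @ (n-1) # n # rest"
proof (induction xs)
  case Nil then show ?case by simp
next
  case (Cons a xs)
  then have "a \<noteq> n" by auto
  then show ?case using Cons by (subst append_Cons, subst repl_cons) simp_all
qed

lemma pairs_prod:
  "sorted_wrt (<) (l::nat list) \<Longrightarrow>
   (\<Prod>(i, j)\<in>{(i, j). i \<in> set l \<and> j \<in> set l \<and> i < j}. P (g i) (g j)) = ppf P (map g l)"
proof (induction l)
  case Nil
  have E: "{(i, j). i \<in> set ([]::nat list) \<and> j \<in> set ([]::nat list) \<and> i < j} = {}" by (rule equals0I) auto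
  show ?case unfolding E by simp
next
  case (Cons y l)
  have ltsl: "(\<forall>z\<in>set l. y < z) \<and> sorted_wrt (<) l" using Cons.prems unfolding sorted_wrt.simps(2) by assumption
  have lt: "\<forall>z\<in>set l. y < z" and sl: "sorted_wrt (<) l" using ltsl by (rule conjunct1, rule conjunct2)
  have dl: "distinct l" using strict_sorted_iff[THEN iffD1, OF sl] by (rule conjunct2)
  define A where "A = (\<lambda>z. (y, z)) ` set l"
  define B where "B = {(i, j). i \<in> set l \<and> j \<in> set l \<and> i < j}"
  have S: "{(i, j). i \<in> set (y # l) \<and> j \<in> set (y # l) \<and> i < j} = A \<union> B"
  proof (rule set_eqI)
    fix pr :: "nat \<times> nat"
    obtain i j where pr: "pr = (i, j)" by (cases pr)
    show "pr \<in> {(i, j). i \<in> set (y # l) \<and> j \<in> set (y # l) \<and> i < j} \<longleftrightarrow> pr \<in> A \<union> B"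
    proof
      assume h: "pr \<in> {(i, j). i \<in> set (y # l) \<and> j \<in> set (y # l) \<and> i < j}"
      then have hi: "i = y \<or> i \<in> set l" and hj: "j = y \<or> j \<in> set l" and ij: "i < j" by (auto simp: pr)
      show "pr \<in> A \<union> B"
      proof (cases "i = y")
        case True
        then have "j \<in> set l" using hj ij by auto
        then show ?thesis using True by (auto simp: A_def pr)
      next
        case False
        then have "i \<in> set l" using hi by auto
        then have "j \<in> set l" using hj ij lt by force
        then show ?thesis using \<open>i \<in> set l\<close> ij by (auto simp: B_def pr)
      qed
    next
      assume "pr \<in> A \<union> B"
      then show "pr \<in> {(i, j). i \<in> set (y # l) \<and> j \<in> set (y # l) \<and> i < j}"
        using lt by (auto simp: A_def B_def pr)
    qed
  qed
  have D: "A \<inter> B = {}"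
  proof -
    have "\<And>z. (y, z) \<notin> B" using lt by (auto simp: B_def)
    then show ?thesis by (auto simp: A_def)
  qed
  have fin: "finite B"
    by (rule finite_subset[of _ "set l \<times> set l"]) (auto simp: B_def)
  have "(\<Prod>(i, j)\<in>{(i, j). i \<in> set (y # l) \<and> j \<in> set (y # l) \<and> i < j}. P (g i) (g j))
      = (\<Prod>(i, j)\<in>A. P (g i) (g j)) * (\<Prod>(i, j)\<in>B. P (g i) (g j))"
    unfolding S by (rule prod.union_disjoint) (use D fin in \<open>auto simp: A_def\<close>)
  also have "(\<Prod>(i, j)\<in>A. P (g i) (g j)) = (\<Prod>z\<in>set l. P (g y) (g z))"
    unfolding A_def by (subst prod.reindex) (auto simp: inj_on_def)
  also have "\<dots> = Epf P (g y) (map g l)"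
    using dl by (simp add: prod.distinct_set_conv_list Epf_def comp_def)
  finally have C: "(\<Prod>(i, j)\<in>{(i, j). i \<in> set (y # l) \<and> j \<in> set (y # l) \<and> i < j}. P (g i) (g j))
      = Epf P (g y) (map g l) * (\<Prod>(i, j)\<in>B. P (g i) (g j))" .
  show ?case unfolding list.map ppf.simps C Cons.IH[OF sl, folded B_def] ..
qed

lemma map_ltr: "n \<le> m \<Longrightarrow> m \<le> 2 * n \<Longrightarrow> map (ltr n) [Suc n..<Suc m] = rev [2*n-m..<n]"
proof (induction m rule: dec_induct)
  case base then show ?case by simp
next
  case (step m)
  have "[2*n - Suc m..<n] = (2*n - Suc m) # [2*n - m..<n]"
    using step by (simp add: upt_conv_Cons Suc_diff_Suc)
  then show ?case using step by (simp add: ltr_def)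
qed

context SO begin

lemma elab_eq: "1 \<le> k \<Longrightarrow> k \<le> n - 1 \<Longrightarrow> n < m \<Longrightarrow> elab n k m = [k..<n-1] @ n # [Suc n..<Suc m]"
  by (auto simp: elab_def)

lemma ltr_low: "x \<le> n \<Longrightarrow> ltr n x = x" by (simp add: ltr_def)

lemma ew_eq: "1 \<le> k \<Longrightarrow> k \<le> n - 1 \<Longrightarrow> n < m \<Longrightarrow> m < 2 * n \<Longrightarrow> ew n k m = W k (2*n - m)"
proof -
  assume a: "1 \<le> k" "k \<le> n - 1" "n < m" "m < 2 * n"
  have m1: "map (ltr n) [k..<n-1] = [k..<n-1]" by (rule map_idI) (auto simp: ltr_def)
  have ml: "map (ltr n) [Suc n..<Suc m] = rev [2*n-m..<n]" using a by (intro map_ltr) auto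
  have ln: "ltr n n = n" by (simp add: ltr_def)
  show ?thesis unfolding ew_def elab_eq[OF a(1-3)] W_def map_append list.map m1 ml ln ..
qed

lemma ew'_eq: "1 \<le> k \<Longrightarrow> k \<le> n - 1 \<Longrightarrow> n < m \<Longrightarrow> m < 2 * n \<Longrightarrow> ew' n k m = W' k (2*n - m)"
proof -
  assume a: "1 \<le> k" "k \<le> n - 1" "n < m" "m < 2 * n"
  have m1: "map (ltr n) [k..<n-1] = [k..<n-1]" by (rule map_idI) (auto simp: ltr_def)
  have u: "[Suc n..<Suc m] = Suc n # [Suc (Suc n)..<Suc m]" using a by (simp add: upt_conv_Cons)
  have r: "repl n ([k..<n-1] @ n # [Suc n..<Suc m]) = [k..<n-1] @ (n-1) # n # [Suc (Suc n)..<Suc m]"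
    unfolding u by (rule repl_app) auto
  have ml: "map (ltr n) [Suc n..<Suc m] = rev [2*n-m..<n]" using a by (intro map_ltr) auto
  have "map (ltr n) [Suc n..<Suc m] = (n-1) # map (ltr n) [Suc (Suc n)..<Suc m]"
    unfolding u using n3 by (simp add: ltr_def)
  moreover have "rev [2*n-m..<n] = (n-1) # rev [2*n-m..<n-1]" using a by (intro rev_upt_top) auto
  ultimately have ml2: "map (ltr n) [Suc (Suc n)..<Suc m] = rev [2*n-m..<n-1]" using ml by simp
  have ln: "ltr n n = n" "ltr n (n-1) = n-1" by (auto simp: ltr_def)
  show ?thesis unfolding ew'_def elab_eq[OF a(1-3)] r W'_def map_append list.map m1 ml2 ln ..
qed

lemma prod_eq: "1 \<le> k \<Longrightarrow> k \<le> n - 1 \<Longrightarrow> n < m \<Longrightarrow> m < 2 * n \<Longrightarrow>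
  (\<Prod>(i, j)\<in>{(i, j). k \<le> i \<and> i < j \<and> j \<le> m \<and> i \<noteq> n - 1 \<and> j \<noteq> n - 1}. P (ltr n i) (ltr n j))
  = ppf P (W k (2*n - m))"
proof -
  assume a: "1 \<le> k" "k \<le> n - 1" "n < m" "m < 2 * n"
  define L where "L = elab n k m"
  have sL: "sorted_wrt (<) L" unfolding L_def elab_eq[OF a(1-3)]
    by (auto simp: sorted_wrt_append)
  have setL: "set L = {x. k \<le> x \<and> x \<le> m \<and> x \<noteq> n - 1}"
    unfolding L_def elab_eq[OF a(1-3)] using a by auto
  have S: "{(i, j). k \<le> i \<and> i < j \<and> j \<le> m \<and> i \<noteq> n - 1 \<and> j \<noteq> n - 1} = {(i, j). i \<in> set L \<and> j \<in> set L \<and> i < j}"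
    unfolding setL by auto
  have "ppf P (map (ltr n) L) = ppf P (W k (2*n - m))" using ew_eq[OF a] by (simp add: ew_def L_def)
  then show ?thesis unfolding S pairs_prod[OF sL, where P=P and g="ltr n"] .
qed

end

theorem proposition8p1:
  fixes q :: "'k::field" and P :: "nat \<Rightarrow> nat \<Rightarrow> 'k" and n k m :: nat
  assumes "so_params n q P"
    and "1 \<le> k" and "k < n" and "n < m" and "m < 2 * n"
  shows "ebr n q P k m =
    sh_scale ((if m = phi n k then inverse q else 1) * (q - 1) ^ (m - k - 1) *
              (\<Prod>(i, j)\<in>{(i, j). k \<le> i \<and> i < j \<and> j \<le> m \<and> i \<noteq> n - 1 \<and> j \<noteq> n - 1}.
                   P (ltr n i) (ltr n j)))
      (sh_add (comon (rev (ew n k m)))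
              (sh_scale (P (n - 1) n) (comon (rev (ew' n k m)))))"
proof -
  interpret SO n q P by standard (rule assms(1))
  define j where "j = 2 * n - m"
  have a: "1 \<le> k" "k \<le> n - 1" "n < m" "m < 2 * n" using assms by auto
  have j: "1 \<le> j" "j \<le> n - 1" "m = 2 * n - j" using assms by (auto simp: j_def)
  have ex: "m - k - 1 = 2*n-j-k-1" using j by simp
  have RHS: "sh_scale ((if m = phi n k then inverse q else 1) * (q - 1) ^ (m - k - 1) *
              (\<Prod>(i, j)\<in>{(i, j). k \<le> i \<and> i < j \<and> j \<le> m \<and> i \<noteq> n - 1 \<and> j \<noteq> n - 1}.
                   P (ltr n i) (ltr n j)))
      (sh_add (comon (rev (ew n k m)))
              (sh_scale (P (n - 1) n) (comon (rev (ew' n k m)))))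
    = comb ((if m = phi n k then inverse q else 1) * ((q-1)^(2*n-j-k-1) * ppf P (W k j))) (P (n-1) n) (rev (W k j)) (rev (W' k j))"
    unfolding comb_def prod_eq[OF a] ew_eq[OF a] ew'_eq[OF a] ex j_def[symmetric] by (simp add: mult.assoc)
  consider "m < phi n k" | "m > phi n k" | "m = phi n k" by linarith
  then show ?thesis
  proof cases
    case 1
    then have kj: "k < j" using j by (simp add: phi_def)
    have "ebr n q P k m = leftb P (W k j)" using 1 by (simp add: ebr_def ew_eq[OF a] j_def)
    also have "\<dots> = comb ((q-1)^(2*n-j-k-1) * ppf P (W k j)) (P (n-1) n) (rev (W k j)) (rev (W' k j))"
      using kj j a by (intro LEFT) auto
    finally show ?thesis unfolding RHS using 1 by simp
  next
    case 2
    then have kj: "j < k" using j by (simp add: phi_def)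
    have "ebr n q P k m = rightb P (W k j)" using 2 by (simp add: ebr_def ew_eq[OF a] j_def)
    also have "\<dots> = comb ((q-1)^(2*n-j-k-1) * ppf P (W k j)) (P (n-1) n) (rev (W k j)) (rev (W' k j))"
      using kj j a by (intro RIGHT) auto
    finally show ?thesis unfolding RHS using 2 by simp
  next
    case 3
    then have kj: "j = k" using j by (simp add: phi_def)
    have lm: "ltr n (phi n k) = k" using 3 a by (simp add: ltr_def phi_def)
    have "ebr n q P k m = sh_add (sh_mult P (leftb P (ew n k (m - 1))) (comon [k]))
           (sh_scale (- inverse q * pw P (ew n k (m - 1)) [k]) (sh_mult P (comon [k]) (leftb P (ew n k (m - 1)))))"
      using 3 by (simp add: ebr_def lm Let_def)
    also have "\<dots> = comb (inverse q * (q-1)^(2*n-2*k-1) * ppf P (W k k)) (P (n-1) n) (rev (W k k)) (rev (W' k k))"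
    proof (cases "k = n - 1")
      case True
      have e: "ew n k (m - 1) = [n]" using True 3 a n3 by (simp add: phi_def ew_def elab_def ltr_def)
      show ?thesis unfolding e leftb_single using MIDB True by simp
    next
      case False
      have e: "ew n k (m - 1) = W k (Suc k)"
        using False 3 a by (subst ew_eq) (auto simp: phi_def intro!: arg_cong[where f="W k"])
      show ?thesis unfolding e using False a by (intro MID) auto
    qed
    finally show ?thesis unfolding RHS using 3 kj by (simp add: mult.assoc mult_2)
  qed
qed


end
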